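(* For every graph $G$, we have $\lfloor \mathrm{sp}\rfloor(G)\geq|V(G)|-\mathrm{diam}(G)-1$. Moreover, if $\mathrm{usp}(G)\leq\mathrm{diam}(G)$, then $\lfloor \mathrm{sp}\rfloor(G)\geq|V(G)|-\mathrm{diam}(G)$.
   Context: All graphs are finite, have at least one vertex, have no loops, and may have multiple (parallel) edges. $\mathrm{diam}(G)$ is the diameter of $G$ (maximum distance, in number of edges, between two vertices). A unique shortest path is a shortest $u$–$v$ path $P$ such that every $u$–$v$ path with the same number of vertices is identical to $P$, where two paths with different edge sequences are different even if their vertex sequences agree; a single vertex is a unique shortest path. The parade number $\mathrm{usp}(G)$ is the largest number of vertices of a unique shortest path in $G$. The spectator number is $\mathrm{sp}(G)=|V(G)|-\mathrm{usp}(G)$. A minor of $H$ is any graph obtained from $H$ by a sequence of: deleting an isolated vertex, deleting an edge, contracting an edge that has no edge parallel to it. The spectator floor $\lfloor \mathrm{sp}\rfloor(G)$ is the minimum of $\mathrm{sp}(H)$ over all graphs $H$ of which $G$ is a minor. *)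

theory Defs
  imports Main "HOL-Library.Extended_Nat"
begin

text \<open>Finite multigraphs (parallel edges allowed, no loops, at least one vertex).
  Each edge e has a set of two distinct endpoints ends e.\<close>

record ('v, 'e) mgraph =
  verts :: "'v set"
  edges :: "'e set"
  ends  :: "'e \<Rightarrow> 'v set"

definition mgraph :: "('v, 'e) mgraph \<Rightarrow> bool" where
  "mgraph G \<longleftrightarrow> finite (verts G) \<and> finite (edges G) \<and> verts G \<noteq> {} \<and>
     (\<forall>e\<in>edges G. ends G e \<subseteq> verts G \<and> card (ends G e) = 2)"

text \<open>A path is a pair (vertex sequence, edge sequence): distinct vertices, consecutive
  vertices joined by the corresponding edge. Paths with different edge sequences
  are different.\<close>

definition is_path :: "('v, 'e) mgraph \<Rightarrow> 'v list \<Rightarrow> 'e list \<Rightarrow> bool" where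
  "is_path G vs es \<longleftrightarrow> vs \<noteq> [] \<and> distinct vs \<and> set vs \<subseteq> verts G \<and>
     length es + 1 = length vs \<and>
     (\<forall>i < length es. es ! i \<in> edges G \<and> ends G (es ! i) = {vs ! i, vs ! Suc i})"

definition is_uv_path :: "('v, 'e) mgraph \<Rightarrow> 'v \<Rightarrow> 'v \<Rightarrow> 'v list \<Rightarrow> 'e list \<Rightarrow> bool" where
  "is_uv_path G u v vs es \<longleftrightarrow> is_path G vs es \<and> hd vs = u \<and> last vs = v"

definition gdist :: "('v, 'e) mgraph \<Rightarrow> 'v \<Rightarrow> 'v \<Rightarrow> enat" where
  "gdist G u v = (INF p \<in> {(vs, es). is_uv_path G u v vs es}. enat (length (snd p)))"

definition diam :: "('v, 'e) mgraph \<Rightarrow> enat" where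
  "diam G = (SUP u \<in> verts G. SUP v \<in> verts G. gdist G u v)"

definition is_shortest_path :: "('v, 'e) mgraph \<Rightarrow> 'v list \<Rightarrow> 'e list \<Rightarrow> bool" where
  "is_shortest_path G vs es \<longleftrightarrow> is_path G vs es \<and>
     (\<forall>vs' es'. is_uv_path G (hd vs) (last vs) vs' es' \<longrightarrow> length vs \<le> length vs')"

definition is_usp :: "('v, 'e) mgraph \<Rightarrow> 'v list \<Rightarrow> 'e list \<Rightarrow> bool" where
  "is_usp G vs es \<longleftrightarrow> is_shortest_path G vs es \<and>
     (\<forall>vs' es'. is_uv_path G (hd vs) (last vs) vs' es' \<and> length vs' = length vs
        \<longrightarrow> vs' = vs \<and> es' = es)"

definition usp :: "('v, 'e) mgraph \<Rightarrow> nat" where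
  "usp G = Max {length vs | vs es. is_usp G vs es}"

definition sp :: "('v, 'e) mgraph \<Rightarrow> nat" where
  "sp G = card (verts G) - usp G"

definition mg_iso :: "('v, 'e) mgraph \<Rightarrow> ('w, 'f) mgraph \<Rightarrow> bool" where
  "mg_iso G H \<longleftrightarrow> (\<exists>f g. bij_betw f (verts G) (verts H) \<and> bij_betw g (edges G) (edges H) \<and>
     (\<forall>e\<in>edges G. ends H (g e) = f ` ends G e))"

definition minor_step :: "('v, 'e) mgraph \<Rightarrow> ('v, 'e) mgraph \<Rightarrow> bool" where
  "minor_step H H' \<longleftrightarrow> mgraph H' \<and>
    ((\<exists>v\<in>verts H. (\<forall>e\<in>edges H. v \<notin> ends H e) \<and>
        H' = \<lparr>verts = verts H - {v}, edges = edges H, ends = ends H\<rparr>)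
   \<or> (\<exists>e\<in>edges H. H' = \<lparr>verts = verts H, edges = edges H - {e}, ends = ends H\<rparr>)
   \<or> (\<exists>e\<in>edges H. \<exists>a b. ends H e = {a, b} \<and> a \<noteq> b \<and>
        (\<forall>e'\<in>edges H. e' \<noteq> e \<longrightarrow> ends H e' \<noteq> {a, b}) \<and>
        H' = \<lparr>verts = verts H - {b}, edges = edges H - {e},
               ends = (\<lambda>e'. (\<lambda>x. if x = b then a else x) ` ends H e')\<rparr>))"

definition is_minor :: "('w, 'f) mgraph \<Rightarrow> ('v, 'e) mgraph \<Rightarrow> bool" where
  "is_minor G H \<longleftrightarrow> (\<exists>H'. minor_step\<^sup>*\<^sup>* H H' \<and> mg_iso H' G)"

text \<open>Spectator floor: minimum of sp H over all graphs H having G as a minor.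
  Every finite graph is isomorphic to one with vertex and edge type nat, so it
  suffices to range over those.\<close>

definition sp_floor :: "('w, 'f) mgraph \<Rightarrow> nat" where
  "sp_floor G = Inf {sp H | H :: (nat, nat) mgraph. mgraph H \<and> is_minor G H}"

end

theory Submission
  imports Defs
begin

fun wk :: "('v, 'e) mgraph \<Rightarrow> 'v list \<Rightarrow> 'e list \<Rightarrow> bool" where
  "wk K [v] [] = (v \<in> verts K)"
| "wk K (v # w # vs) (f # es) = (f \<in> edges K \<and> ends K f = {v, w} \<and> v \<in> verts K \<and> wk K (w # vs) es)"
| "wk K _ _ = False"

lemma wk_len: "wk K vs es \<Longrightarrow> length vs = Suc (length es)"
  by (induction K vs es rule: wk.induct) auto

lemma wk_nonempty: "wk K vs es \<Longrightarrow> vs \<noteq> []"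
  by (induction K vs es rule: wk.induct) auto

lemma wk_verts: "wk K vs es \<Longrightarrow> set vs \<subseteq> verts K"
  by (induction K vs es rule: wk.induct) auto

lemma wk_edges: "wk K vs es \<Longrightarrow> set es \<subseteq> edges K"
  by (induction K vs es rule: wk.induct) auto

lemma wk_iff: "wk K vs es \<longleftrightarrow> (vs \<noteq> [] \<and> set vs \<subseteq> verts K \<and> length es + 1 = length vs \<and>
     (\<forall>i < length es. es ! i \<in> edges K \<and> ends K (es ! i) = {vs ! i, vs ! Suc i}))"
proof (induction es arbitrary: vs)
  case Nil
  then show ?case by (cases vs) (auto elim: wk.elims)
next
  case (Cons f es)
  show ?case
  proof (cases vs)
    case Nil then show ?thesis by simp
  next
    case (Cons v vs')
    show ?thesis
    proof (cases vs')
      case Nil then show ?thesis using Cons by simp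
    next
      case (Cons w vs'')
      have "(\<forall>i < length (f#es). (f#es) ! i \<in> edges K \<and> ends K ((f#es) ! i) = {vs ! i, vs ! Suc i})
          \<longleftrightarrow> (f \<in> edges K \<and> ends K f = {v, w}) \<and>
             (\<forall>i < length es. es ! i \<in> edges K \<and> ends K (es ! i) = {vs' ! i, vs' ! Suc i})"
        using \<open>vs = v # vs'\<close> Cons by (auto simp: less_Suc_eq_0_disj)
      then show ?thesis using Cons.IH[of vs'] \<open>vs = v # vs'\<close> Cons by auto
    qed
  qed
qed

lemma is_path_wk: "is_path K vs es \<longleftrightarrow> wk K vs es \<and> distinct vs"
  unfolding is_path_def wk_iff by auto

lemma wk_concat_edge:
  "wk K vs1 es1 \<Longrightarrow> wk K vs2 es2 \<Longrightarrow> f \<in> edges K \<Longrightarrow> ends K f = {last vs1, hd vs2}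
   \<Longrightarrow> wk K (vs1 @ vs2) (es1 @ f # es2)"
proof (induction K vs1 es1 rule: wk.induct)
  case (1 K v)
  then show ?case by (cases vs2) (auto dest: wk_nonempty)
next
  case (2 K v w vs f' es)
  then show ?case by auto
qed auto

lemma wk_concat:
  "wk K vs1 es1 \<Longrightarrow> wk K vs2 es2 \<Longrightarrow> last vs1 = hd vs2 \<Longrightarrow> wk K (vs1 @ tl vs2) (es1 @ es2)"
proof (induction K vs1 es1 rule: wk.induct)
  case (1 K v)
  then show ?case by (cases vs2) auto
next
  case (2 K v w vs f' es)
  then show ?case by (cases vs2) auto
qed auto

lemma wk_split:
  "wk K vs (es1 @ f # es2) \<Longrightarrow> \<exists>vs1 vs2. vs = vs1 @ vs2 \<and> wk K vs1 es1 \<and> wk K vs2 es2 \<and>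
      f \<in> edges K \<and> ends K f = {last vs1, hd vs2}"
proof (induction es1 arbitrary: vs)
  case Nil
  then obtain v w rest where vs: "vs = v # w # rest"
    by (cases vs; cases "tl vs") auto
  show ?case
    by (rule exI[of _ "[v]"], rule exI[of _ "w # rest"]) (use Nil vs in auto)
next
  case (Cons g es1)
  then obtain v w rest where vs: "vs = v # w # rest"
    by (cases vs; cases "tl vs") auto
  with Cons.prems have "wk K (w # rest) (es1 @ f # es2)" "g \<in> edges K" "ends K g = {v, w}" "v \<in> verts K"
    by auto
  from Cons.IH[OF this(1)] obtain vs1 vs2 where
    h: "w # rest = vs1 @ vs2" "wk K vs1 es1" "wk K vs2 es2" "f \<in> edges K" "ends K f = {last vs1, hd vs2}"
    by blast
  have "vs1 \<noteq> []" using h(2) wk_nonempty by blast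
  then have "hd vs1 = w" using h(1) by (cases vs1) auto
  then have "wk K (v # vs1) (g # es1)" using h(2) \<open>vs1 \<noteq> []\<close> \<open>g \<in> edges K\<close> \<open>ends K g = {v, w}\<close> \<open>v \<in> verts K\<close>
    by (cases vs1) auto
  moreover have "vs = (v # vs1) @ vs2" using vs h(1) by simp
  moreover have "last (v # vs1) = last vs1" using \<open>vs1 \<noteq> []\<close> by simp
  ultimately show ?case using h(3-5) by metis
qed

lemma wk_rev: "wk K vs es \<Longrightarrow> wk K (rev vs) (rev es)"
proof (induction K vs es rule: wk.induct)
  case (2 K v w vs f es)
  then have "wk K (rev (w # vs)) (rev es)" "wk K [v] []" by auto
  then have "wk K (rev (w # vs) @ [v]) (rev es @ f # [])"
    using 2 by (intro wk_concat_edge) (auto simp: insert_commute)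
  then show ?case by simp
qed auto

lemma wk_drop: "wk K vs es \<Longrightarrow> k < length vs \<Longrightarrow> wk K (drop k vs) (drop k es)"
proof (induction k arbitrary: vs es)
  case (Suc k)
  then obtain v w rest f es' where "vs = v # w # rest" "es = f # es'"
    by (cases vs; cases "tl vs"; cases es) auto
  then show ?case using Suc by auto
qed auto

lemma wk_ends_in: "wk K vs es \<Longrightarrow> f \<in> set es \<Longrightarrow> ends K f \<subseteq> set vs"
  by (induction K vs es rule: wk.induct) auto

lemma wk_distinct_edges: "wk K vs es \<Longrightarrow> distinct vs \<Longrightarrow> distinct es"
proof (induction K vs es rule: wk.induct)
  case (2 K v w vs f es)
  then have "f \<notin> set es" using wk_ends_in[of K "w # vs" es f] by auto
  then show ?case using 2 by auto
qed auto

lemma wk_det: "wk K vs es \<Longrightarrow> wk K ws es \<Longrightarrow> hd vs = hd ws \<Longrightarrow> vs = ws"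
proof (induction K vs es arbitrary: ws rule: wk.induct)
  case (1 K v)
  then show ?case by (cases ws; cases "tl ws") auto
next
  case (2 K v w vs f es)
  from 2(3) obtain w' ws' where ws: "ws = v # w' # ws'" "ends K f = {v, w'}" "wk K (w' # ws') es"
    using 2(4) by (cases ws; cases "tl ws") auto
  then have "w' = w" using 2(2) by (auto simp: doubleton_eq_iff)
  have "wk K (w # vs) es" using 2(2) by simp
  moreover have "wk K (w # ws') es" using ws(3) \<open>w' = w\<close> by simp
  ultimately have "w # vs = w # ws'" using 2(1) by (metis list.sel(1))
  then show ?case using ws \<open>w' = w\<close> by simp
qed auto

lemma wk_shorten:
  "wk K vs es \<Longrightarrow> \<not> distinct vs \<Longrightarrow> \<exists>vs' es'. wk K vs' es' \<and> hd vs' = hd vs \<and> last vs' = last vs \<and> length es' < length es"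
proof (induction K vs es rule: wk.induct)
  case (2 K v w vs f es)
  show ?case
  proof (cases "v \<in> set (w # vs)")
    case True
    then obtain k where k: "k < length (w # vs)" "(w # vs) ! k = v" by (metis in_set_conv_nth)
    have "wk K (w # vs) es" using 2 by simp
    from wk_drop[OF this k(1)] have W: "wk K (drop k (w # vs)) (drop k es)" .
    have "hd (drop k (w # vs)) = v" using k by (simp add: hd_drop_conv_nth)
    moreover have "last (drop k (w # vs)) = last (w # vs)" using k(1) by simp
    moreover have "length (drop k es) < length (f # es)" by simp
    ultimately show ?thesis using W by (intro exI[of _ "drop k (w # vs)"] exI[of _ "drop k es"]) auto
  next
    case False
    then have "\<not> distinct (w # vs)" using 2(3) by simp
    with 2 obtain vs' es' where h: "wk K vs' es'" "hd vs' = w" "last vs' = last (w # vs)" "length es' < length es"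
      by auto
    have "vs' \<noteq> []" using h(1) wk_nonempty by blast
    then have "wk K (v # vs') (f # es')" using h 2(2) by (cases vs') auto
    then show ?thesis using h \<open>vs' \<noteq> []\<close> by (intro exI[of _ "v # vs'"] exI[of _ "f # es'"]) auto
  qed
qed auto

lemma wk_to_path:
  "wk K vs es \<Longrightarrow> \<exists>vs' es'. wk K vs' es' \<and> distinct vs' \<and> hd vs' = hd vs \<and> last vs' = last vs \<and> length es' \<le> length es"
proof (induction "length es" arbitrary: vs es rule: less_induct)
  case less
  show ?case
  proof (cases "distinct vs")
    case True then show ?thesis using less.prems by blast
  next
    case False
    then obtain vs' es' where "wk K vs' es'" "hd vs' = hd vs" "last vs' = last vs" "length es' < length es"
      using wk_shorten less.prems by blast
    then show ?thesis using less.hyps[of es' vs'] by fastforce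
  qed
qed

definition wkuv :: "('v, 'e) mgraph \<Rightarrow> 'v \<Rightarrow> 'v \<Rightarrow> 'v list \<Rightarrow> 'e list \<Rightarrow> bool" where
  "wkuv K x y vs es \<longleftrightarrow> wk K vs es \<and> hd vs = x \<and> last vs = y"

definition reach :: "('v, 'e) mgraph \<Rightarrow> 'v \<Rightarrow> 'v \<Rightarrow> bool" where
  "reach K x y \<longleftrightarrow> (\<exists>vs es. wkuv K x y vs es)"

definition dist :: "('v, 'e) mgraph \<Rightarrow> 'v \<Rightarrow> 'v \<Rightarrow> nat" where
  "dist K x y = (LEAST n. \<exists>vs es. wkuv K x y vs es \<and> length es = n)"

lemma dist_le: "wkuv K x y vs es \<Longrightarrow> dist K x y \<le> length es"
  unfolding dist_def by (rule Least_le) blast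

lemma dist_path:
  assumes "reach K x y"
  shows "\<exists>vs es. wkuv K x y vs es \<and> distinct vs \<and> length es = dist K x y"
proof -
  from assms obtain vs0 es0 where "wkuv K x y vs0 es0" unfolding reach_def by blast
  then have "\<exists>n. \<exists>vs es. wkuv K x y vs es \<and> length es = n" by blast
  from LeastI_ex[OF this] have "\<exists>vs es. wkuv K x y vs es \<and> length es = dist K x y"
    unfolding dist_def .
  then obtain vs es where h: "wkuv K x y vs es" "length es = dist K x y" by blast
  have "distinct vs"
  proof (rule ccontr)
    assume "\<not> distinct vs"
    then obtain vs' es' where "wk K vs' es'" "hd vs' = hd vs" "last vs' = last vs" "length es' < length es"
      using wk_shorten h(1) unfolding wkuv_def by blast
    then have "wkuv K x y vs' es'" using h(1) unfolding wkuv_def by auto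
    then have "dist K x y \<le> length es'" by (rule dist_le)
    then show False using h(2) \<open>length es' < length es\<close> by simp
  qed
  then show ?thesis using h by blast
qed

lemma wk_min_distinct:
  "wkuv K x y vs es \<Longrightarrow> length es \<le> dist K x y \<Longrightarrow> distinct vs \<and> length es = dist K x y"
proof -
  assume a: "wkuv K x y vs es" "length es \<le> dist K x y"
  have "distinct vs"
  proof (rule ccontr)
    assume "\<not> distinct vs"
    then obtain vs' es' where "wk K vs' es'" "hd vs' = hd vs" "last vs' = last vs" "length es' < length es"
      using wk_shorten a(1) unfolding wkuv_def by blast
    then have "wkuv K x y vs' es'" using a(1) unfolding wkuv_def by auto
    then have "dist K x y \<le> length es'" by (rule dist_le)
    then show False using a(2) \<open>length es' < length es\<close> by simp
  qed
  then show ?thesis using a dist_le[OF a(1)] by simp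
qed

lemma hd_last_concat: "vs1 \<noteq> [] \<Longrightarrow> vs2 \<noteq> [] \<Longrightarrow> last vs1 = hd vs2 \<Longrightarrow>
   hd (vs1 @ tl vs2) = hd vs1 \<and> last (vs1 @ tl vs2) = last vs2"
  by (cases vs2; cases "tl vs2") auto

lemma reach_refl: "x \<in> verts K \<Longrightarrow> reach K x x"
  unfolding reach_def wkuv_def by (rule exI[of _ "[x]"], rule exI[of _ "[]"]) simp

lemma reach_trans: "reach K x y \<Longrightarrow> reach K y z \<Longrightarrow> reach K x z"
proof -
  assume "reach K x y" "reach K y z"
  then obtain vs1 es1 vs2 es2 where a: "wkuv K x y vs1 es1" "wkuv K y z vs2 es2" unfolding reach_def by blast
  then have W: "wk K (vs1 @ tl vs2) (es1 @ es2)" unfolding wkuv_def by (intro wk_concat) auto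
  have "vs1 \<noteq> []" "vs2 \<noteq> []" using a wk_nonempty unfolding wkuv_def by auto
  then have "hd (vs1 @ tl vs2) = x" "last (vs1 @ tl vs2) = z" using a hd_last_concat[of vs1 vs2] unfolding wkuv_def
    by auto
  then show ?thesis using W unfolding reach_def wkuv_def by blast
qed

lemma dist_trans: "reach K x y \<Longrightarrow> reach K y z \<Longrightarrow> dist K x z \<le> dist K x y + dist K y z"
proof -
  assume "reach K x y" "reach K y z"
  from dist_path[OF this(1)] obtain vs1 es1 where a1: "wkuv K x y vs1 es1" "length es1 = dist K x y" by blast
  from dist_path[OF \<open>reach K y z\<close>] obtain vs2 es2 where a2: "wkuv K y z vs2 es2" "length es2 = dist K y z" by blast
  note a = a1 a2
  then have W: "wk K (vs1 @ tl vs2) (es1 @ es2)" unfolding wkuv_def by (intro wk_concat) auto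
  have "vs1 \<noteq> []" "vs2 \<noteq> []" using a wk_nonempty unfolding wkuv_def by auto
  then have "hd (vs1 @ tl vs2) = x" "last (vs1 @ tl vs2) = z" using a hd_last_concat[of vs1 vs2] unfolding wkuv_def
    by auto
  then have "wkuv K x z (vs1 @ tl vs2) (es1 @ es2)" using W unfolding wkuv_def by blast
  then show ?thesis using dist_le a by fastforce
qed

lemma reach_sym: "reach K x y \<Longrightarrow> reach K y x"
  unfolding reach_def wkuv_def
  by (metis wk_rev wk_nonempty hd_rev last_rev)

lemma reach_verts: "reach K x y \<Longrightarrow> x \<in> verts K \<and> y \<in> verts K"
  unfolding reach_def wkuv_def by (metis wk_verts wk_nonempty hd_in_set last_in_set subsetD)

lemma wk_reach: "wk K vs es \<Longrightarrow> z \<in> set vs \<Longrightarrow> reach K (hd vs) z"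
proof (induction K vs es rule: wk.induct)
  case (1 K v)
  then show ?case by (auto intro: reach_refl)
next
  case (2 K v w vs f es)
  have e: "reach K v w" unfolding reach_def wkuv_def
    using 2(2) by (intro exI[of _ "[v, w]"] exI[of _ "[f]"]) (auto dest: wk_verts)
  show ?case
  proof (cases "z = v")
    case True then show ?thesis using 2 by (auto intro: reach_refl)
  next
    case False
    then have "reach K w z" using 2 by auto
    then show ?thesis using e reach_trans by fastforce
  qed
qed auto

lemma wkuv_reach: "wkuv K x y vs es \<Longrightarrow> reach K x y"
  unfolding reach_def by blast

lemma is_uv_path_wk: "is_uv_path K u v vs es \<longleftrightarrow> wkuv K u v vs es \<and> distinct vs"
  unfolding is_uv_path_def wkuv_def is_path_wk by auto

definition U :: "('v, 'e) mgraph \<Rightarrow> 'v list \<Rightarrow> 'e list \<Rightarrow> bool" where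
  "U K vs es \<longleftrightarrow> wk K vs es \<and> distinct vs \<and> length es = dist K (hd vs) (last vs) \<and>
     (\<forall>ws fs. wkuv K (hd vs) (last vs) ws fs \<and> length fs \<le> length es \<longrightarrow> ws = vs \<and> fs = es)"

definition hasu :: "('v, 'e) mgraph \<Rightarrow> 'v \<Rightarrow> 'v \<Rightarrow> bool" where
  "hasu K x y \<longleftrightarrow> (\<exists>vs es. U K vs es \<and> hd vs = x \<and> last vs = y)"

lemma U_walk_eq: "U K vs es \<Longrightarrow> wkuv K (hd vs) (last vs) ws fs \<Longrightarrow> length fs \<le> length es \<Longrightarrow> ws = vs \<and> fs = es"
  unfolding U_def by blast

lemma is_usp_U: "is_usp K vs es \<longleftrightarrow> U K vs es"
proof
  assume a: "is_usp K vs es"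
  then have p: "wk K vs es" "distinct vs" unfolding is_usp_def is_shortest_path_def is_path_wk by auto
  have w: "wkuv K (hd vs) (last vs) vs es" using p unfolding wkuv_def by auto
  have r: "reach K (hd vs) (last vs)" using w by (rule wkuv_reach)
  from dist_path[OF r] obtain vs' es' where "wkuv K (hd vs) (last vs) vs' es'" "distinct vs'"
    "length es' = dist K (hd vs) (last vs)" by blast
  then have "length vs \<le> length vs'" using a unfolding is_usp_def is_shortest_path_def is_uv_path_wk by auto
  then have L: "length es = dist K (hd vs) (last vs)"
    using dist_le[OF w] wk_len[OF p(1)] wk_len \<open>wkuv K (hd vs) (last vs) vs' es'\<close> \<open>length es' = _\<close>
    unfolding wkuv_def by fastforce
  have "ws = vs \<and> fs = es" if "wkuv K (hd vs) (last vs) ws fs" "length fs \<le> length es" for ws fs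
  proof -
    from wk_min_distinct[OF that(1)] that(2) L have "distinct ws" "length fs = length es" by auto
    then have "is_uv_path K (hd vs) (last vs) ws fs" "length ws = length vs"
      using that(1) wk_len[OF p(1)] wk_len[of K ws fs] unfolding is_uv_path_wk wkuv_def by auto
    then show ?thesis using a unfolding is_usp_def by blast
  qed
  then show "U K vs es" unfolding U_def using p L by blast
next
  assume a: "U K vs es"
  then have p: "wk K vs es" "distinct vs" and L: "length es = dist K (hd vs) (last vs)" unfolding U_def by auto
  have "length vs \<le> length vs'" if "is_uv_path K (hd vs) (last vs) vs' es'" for vs' es'
    using that dist_le[of K "hd vs" "last vs" vs' es'] L wk_len[OF p(1)] wk_len[of K vs' es']
    unfolding is_uv_path_wk wkuv_def by auto
  moreover have "vs' = vs \<and> es' = es" if "is_uv_path K (hd vs) (last vs) vs' es'" "length vs' = length vs" for vs' es'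
  proof -
    have "wkuv K (hd vs) (last vs) vs' es'" "length es' \<le> length es"
      using that wk_len[OF p(1)] wk_len[of K vs' es'] unfolding is_uv_path_wk by (auto simp: wkuv_def)
    then show ?thesis using U_walk_eq[OF a] by blast
  qed
  ultimately show "is_usp K vs es" unfolding is_usp_def is_shortest_path_def is_path_wk using p by blast
qed


lemma U_wkuv: "U K vs es \<Longrightarrow> wkuv K (hd vs) (last vs) vs es"
  unfolding U_def wkuv_def by auto

lemma U_single: "v \<in> verts K \<Longrightarrow> U K [v] []"
proof -
  assume v: "v \<in> verts K"
  have w: "wkuv K v v [v] []" using v unfolding wkuv_def by simp
  have "dist K v v = 0" using dist_le[OF w] by simp
  moreover have "ws = [v] \<and> fs = []" if "wkuv K v v ws fs" "length fs \<le> 0" for ws fs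
    using that wk_len[of K ws fs] unfolding wkuv_def by (cases ws) auto
  ultimately show ?thesis unfolding U_def using v by auto
qed

lemma split_dist:
  assumes W: "wk K vs1 es1" "wk K vs2 es2" "f \<in> edges K" "ends K f = {last vs1, hd vs2}"
    and L: "length (es1 @ f # es2) = dist K (hd vs1) (last vs2)"
  shows "length es1 = dist K (hd vs1) (last vs1) \<and> length es2 = dist K (hd vs2) (last vs2)"
proof -
  have ne: "vs1 \<noteq> []" "vs2 \<noteq> []" using W wk_nonempty by auto
  have w1: "wkuv K (hd vs1) (last vs1) vs1 es1" and w2: "wkuv K (hd vs2) (last vs2) vs2 es2"
    using W unfolding wkuv_def by auto
  from dist_path[OF wkuv_reach[OF w1]] obtain rs gs where
    R: "wkuv K (hd vs1) (last vs1) rs gs" "length gs = dist K (hd vs1) (last vs1)" by blast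
  have "rs \<noteq> []" using R wk_nonempty unfolding wkuv_def by auto
  have "wk K (rs @ vs2) (gs @ f # es2)" using R W by (intro wk_concat_edge) (auto simp: wkuv_def)
  then have "wkuv K (hd vs1) (last vs2) (rs @ vs2) (gs @ f # es2)"
    using R ne \<open>rs \<noteq> []\<close> unfolding wkuv_def by auto
  from dist_le[OF this] L have A: "length es1 \<le> length gs" by simp
  from dist_path[OF wkuv_reach[OF w2]] obtain rs2 gs2 where
    R2: "wkuv K (hd vs2) (last vs2) rs2 gs2" "length gs2 = dist K (hd vs2) (last vs2)" by blast
  have "rs2 \<noteq> []" using R2 wk_nonempty unfolding wkuv_def by auto
  have "wk K (vs1 @ rs2) (es1 @ f # gs2)" using R2 W by (intro wk_concat_edge) (auto simp: wkuv_def)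
  then have "wkuv K (hd vs1) (last vs2) (vs1 @ rs2) (es1 @ f # gs2)"
    using R2 ne \<open>rs2 \<noteq> []\<close> unfolding wkuv_def by auto
  from dist_le[OF this] L have B: "length es2 \<le> length gs2" by simp
  show ?thesis using A B R R2 dist_le[OF w1] dist_le[OF w2] by simp
qed

lemma U_split:
  assumes u: "U K (vs1 @ vs2) (es1 @ f # es2)"
    and W: "wk K vs1 es1" "wk K vs2 es2" "f \<in> edges K" "ends K f = {last vs1, hd vs2}"
  shows "U K vs1 es1 \<and> U K vs2 es2"
proof -
  have ne: "vs1 \<noteq> []" "vs2 \<noteq> []" using W wk_nonempty by auto
  have hl: "hd (vs1 @ vs2) = hd vs1" "last (vs1 @ vs2) = last vs2" using ne by auto
  have d: "distinct vs1" "distinct vs2" using u unfolding U_def by auto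
  have L: "length (es1 @ f # es2) = dist K (hd vs1) (last vs2)" using u hl unfolding U_def by simp
  note sd = split_dist[OF W L]
  have u1: "ws = vs1 \<and> fs = es1" if "wkuv K (hd vs1) (last vs1) ws fs" "length fs \<le> length es1" for ws fs
  proof -
    have "ws \<noteq> []" using that wk_nonempty unfolding wkuv_def by auto
    have "wk K (ws @ vs2) (fs @ f # es2)" using that W by (intro wk_concat_edge) (auto simp: wkuv_def)
    then have "wkuv K (hd (vs1 @ vs2)) (last (vs1 @ vs2)) (ws @ vs2) (fs @ f # es2)"
      using that ne \<open>ws \<noteq> []\<close> hl unfolding wkuv_def by auto
    from U_walk_eq[OF u this] that(2) show ?thesis by simp
  qed
  have u2: "ws = vs2 \<and> fs = es2" if "wkuv K (hd vs2) (last vs2) ws fs" "length fs \<le> length es2" for ws fs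
  proof -
    have "ws \<noteq> []" using that wk_nonempty unfolding wkuv_def by auto
    have "wk K (vs1 @ ws) (es1 @ f # fs)" using that W by (intro wk_concat_edge) (auto simp: wkuv_def)
    then have "wkuv K (hd (vs1 @ vs2)) (last (vs1 @ vs2)) (vs1 @ ws) (es1 @ f # fs)"
      using that ne \<open>ws \<noteq> []\<close> hl unfolding wkuv_def by auto
    from U_walk_eq[OF u this] that(2) show ?thesis by simp
  qed
  show ?thesis unfolding U_def using W d sd u1 u2 by blast
qed

definition cmp :: "('v, 'e) mgraph \<Rightarrow> 'v \<Rightarrow> 'v set" where
  "cmp K u = {z. reach K u z}"

definition val :: "('v, 'e) mgraph \<Rightarrow> 'v \<Rightarrow> 'v \<Rightarrow> nat" where
  "val K x y = dist K x y + (if hasu K x y then 1 else 0)"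

definition Mc :: "('v, 'e) mgraph \<Rightarrow> 'v \<Rightarrow> nat" where
  "Mc K u = Max ((\<lambda>p. val K (fst p) (snd p)) ` (cmp K u \<times> cmp K u))"

definition Psi :: "('v, 'e) mgraph \<Rightarrow> nat" where
  "Psi K = Max ((\<lambda>u. card (cmp K u) - Mc K u) ` verts K)"

lemma cmp_sub: "cmp K u \<subseteq> verts K"
  unfolding cmp_def using reach_verts by fastforce

lemma cmp_self: "u \<in> verts K \<Longrightarrow> u \<in> cmp K u"
  unfolding cmp_def by (simp add: reach_refl)

lemma cmp_reach: "x \<in> cmp K u \<Longrightarrow> y \<in> cmp K u \<Longrightarrow> reach K x y"
proof -
  assume "x \<in> cmp K u" "y \<in> cmp K u"
  then have "reach K u x" "reach K u y" unfolding cmp_def by auto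
  then show ?thesis using reach_trans[OF reach_sym[of K u x]] by blast
qed

lemma Mc_ge: "finite (verts K) \<Longrightarrow> x \<in> cmp K u \<Longrightarrow> y \<in> cmp K u \<Longrightarrow> val K x y \<le> Mc K u"
proof -
  assume f: "finite (verts K)" and xy: "x \<in> cmp K u" "y \<in> cmp K u"
  have fin: "finite ((\<lambda>p. val K (fst p) (snd p)) ` (cmp K u \<times> cmp K u))"
    using finite_subset[OF cmp_sub f] by auto
  have "val K x y \<in> (\<lambda>p. val K (fst p) (snd p)) ` (cmp K u \<times> cmp K u)"
    using xy by (intro image_eqI[of _ _ "(x, y)"]) auto
  from Max_ge[OF fin this] show ?thesis unfolding Mc_def .
qed

lemma Mc_attained: "finite (verts K) \<Longrightarrow> u \<in> verts K \<Longrightarrow> \<exists>x\<in>cmp K u. \<exists>y\<in>cmp K u. Mc K u = val K x y"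
proof -
  assume f: "finite (verts K)" and u: "u \<in> verts K"
  have fin: "finite ((\<lambda>p. val K (fst p) (snd p)) ` (cmp K u \<times> cmp K u))"
    using finite_subset[OF cmp_sub f] by auto
  have ne: "(\<lambda>p. val K (fst p) (snd p)) ` (cmp K u \<times> cmp K u) \<noteq> {}" using cmp_self[OF u] by auto
  from Max_in[OF fin ne] obtain p where "p \<in> cmp K u \<times> cmp K u" "Mc K u = val K (fst p) (snd p)"
    unfolding Mc_def by blast
  then show ?thesis by (cases p) auto
qed

lemma Psi_ge: "finite (verts K) \<Longrightarrow> u \<in> verts K \<Longrightarrow> card (cmp K u) - Mc K u \<le> Psi K"
  unfolding Psi_def by (rule Max_ge) auto

lemma Psi_attained: "finite (verts K) \<Longrightarrow> verts K \<noteq> {} \<Longrightarrow> \<exists>u\<in>verts K. Psi K = card (cmp K u) - Mc K u"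
proof -
  assume "finite (verts K)" "verts K \<noteq> {}"
  then have "finite ((\<lambda>u. card (cmp K u) - Mc K u) ` verts K)" "(\<lambda>u. card (cmp K u) - Mc K u) ` verts K \<noteq> {}"
    by auto
  from Max_in[OF this] show ?thesis unfolding Psi_def by (metis (no_types, lifting) imageE)
qed

lemma Psi_mono:
  assumes f: "finite (verts K)" "finite (verts K')" "verts K' \<noteq> {}"
    and H: "\<And>u'. u' \<in> verts K' \<Longrightarrow> \<exists>u\<in>verts K. \<forall>x\<in>cmp K u. \<forall>y\<in>cmp K u.
       \<exists>x'\<in>cmp K' u'. \<exists>y'\<in>cmp K' u'. val K x y + card (cmp K' u') \<le> val K' x' y' + card (cmp K u)"
  shows "Psi K' \<le> Psi K"
proof -
  obtain u' where u': "u' \<in> verts K'" "Psi K' = card (cmp K' u') - Mc K' u'"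
    using Psi_attained[OF f(2,3)] by blast
  from H[OF u'(1)] obtain u where u: "u \<in> verts K" and
    h: "\<forall>x\<in>cmp K u. \<forall>y\<in>cmp K u. \<exists>x'\<in>cmp K' u'. \<exists>y'\<in>cmp K' u'.
         val K x y + card (cmp K' u') \<le> val K' x' y' + card (cmp K u)" by blast
  obtain x y where xy: "x \<in> cmp K u" "y \<in> cmp K u" "Mc K u = val K x y"
    using Mc_attained[OF f(1) u] by blast
  from h xy obtain x' y' where "x' \<in> cmp K' u'" "y' \<in> cmp K' u'"
    "val K x y + card (cmp K' u') \<le> val K' x' y' + card (cmp K u)" by blast
  moreover have "val K' x' y' \<le> Mc K' u'" using Mc_ge[OF f(2)] calculation by blast
  ultimately have "Mc K u + card (cmp K' u') \<le> Mc K' u' + card (cmp K u)" using xy by linarith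
  then have "card (cmp K' u') - Mc K' u' \<le> card (cmp K u) - Mc K u" by linarith
  then show ?thesis using u' Psi_ge[OF f(1) u] by linarith
qed

lemma usp_set_finite: "finite (verts K) \<Longrightarrow> finite {length vs | vs es. is_usp K vs es}"
proof -
  assume f: "finite (verts K)"
  have "{length vs | vs es. is_usp K vs es} \<subseteq> {..card (verts K)}"
  proof
    fix n assume "n \<in> {length vs | vs es. is_usp K vs es}"
    then obtain vs es where "n = length vs" "U K vs es" using is_usp_U by blast
    then have "distinct vs" "set vs \<subseteq> verts K" using wk_verts unfolding U_def by auto
    then have "card (set vs) \<le> card (verts K)" using card_mono[OF f] by blast
    then have "n \<le> card (verts K)" using \<open>n = length vs\<close> distinct_card[OF \<open>distinct vs\<close>] by simp
    then show "n \<in> {..card (verts K)}" by simp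
  qed
  then show ?thesis using finite_subset by blast
qed

lemma usp_ge: "finite (verts K) \<Longrightarrow> U K vs es \<Longrightarrow> length vs \<le> usp K"
  unfolding usp_def by (rule Max_ge[OF usp_set_finite]) (auto simp: is_usp_U)

lemma usp_attained: "mgraph K \<Longrightarrow> \<exists>vs es. U K vs es \<and> length vs = usp K"
proof -
  assume m: "mgraph K"
  then have f: "finite (verts K)" and ne: "verts K \<noteq> {}" unfolding mgraph_def by auto
  then obtain v where "v \<in> verts K" by blast
  then have "U K [v] []" by (rule U_single)
  then have "{length vs | vs es. is_usp K vs es} \<noteq> {}" using is_usp_U by blast
  from Max_in[OF usp_set_finite[OF f] this] obtain vs es where "is_usp K vs es" "usp K = length vs"
    unfolding usp_def by blast
  then show ?thesis using is_usp_U by metis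
qed

lemma hasu_val: "U K vs es \<Longrightarrow> val K (hd vs) (last vs) = length vs"
  unfolding val_def hasu_def U_def using wk_len by fastforce

lemma Psi_le_sp: assumes m: "mgraph K" shows "Psi K \<le> sp K"
proof -
  have f: "finite (verts K)" and ne: "verts K \<noteq> {}" using m unfolding mgraph_def by auto
  obtain vs es where u: "U K vs es" "length vs = usp K" using usp_attained[OF m] by blast
  have sv: "set vs \<subseteq> verts K" "distinct vs" using u wk_verts unfolding U_def by auto
  obtain w where w: "w \<in> verts K" "Psi K = card (cmp K w) - Mc K w" using Psi_attained[OF f ne] by blast
  have fc: "finite (cmp K w)" using finite_subset[OF cmp_sub f] .
  show ?thesis
  proof (cases "hd vs \<in> cmp K w")
    case True
    have "last vs \<in> cmp K w"
      using True U_wkuv[OF u(1)] wkuv_reach reach_trans unfolding cmp_def by fastforce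
    then have "val K (hd vs) (last vs) \<le> Mc K w" using Mc_ge[OF f True] by blast
    then have "usp K \<le> Mc K w" using hasu_val[OF u(1)] u(2) by simp
    moreover have "card (cmp K w) \<le> card (verts K)" using card_mono[OF f cmp_sub] .
    ultimately show ?thesis using w unfolding sp_def by linarith
  next
    case False
    have "set vs \<inter> cmp K w = {}"
    proof (rule ccontr)
      assume "set vs \<inter> cmp K w \<noteq> {}"
      then obtain z where z: "z \<in> set vs" "z \<in> cmp K w" by blast
      have "reach K (hd vs) z" using wk_reach[of K vs es z] u(1) z(1) unfolding U_def by auto
      then have "reach K z (hd vs)" by (rule reach_sym)
      then have "hd vs \<in> cmp K w" using z(2) reach_trans unfolding cmp_def by fastforce
      then show False using False by simp
    qed
    then have "card (set vs) + card (cmp K w) \<le> card (verts K)"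
      using card_Un_disjoint[of "set vs" "cmp K w"] fc sv card_mono[OF f, of "set vs \<union> cmp K w"] cmp_sub[of K w]
      by auto
    then show ?thesis using w u(2) distinct_card[OF sv(2)] unfolding sp_def by linarith
  qed
qed

definition subg :: "('v, 'e) mgraph \<Rightarrow> ('v, 'e) mgraph \<Rightarrow> bool" where
  "subg K' K \<longleftrightarrow> verts K' \<subseteq> verts K \<and> edges K' \<subseteq> edges K \<and> (\<forall>f\<in>edges K'. ends K' f = ends K f)"

lemma wk_subg: "subg K' K \<Longrightarrow> wk K' vs es \<Longrightarrow> wk K vs es"
  by (induction K' vs es rule: wk.induct) (auto simp: subg_def)

lemma wkuv_subg: "subg K' K \<Longrightarrow> wkuv K' x y vs es \<Longrightarrow> wkuv K x y vs es"
  unfolding wkuv_def using wk_subg by blast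

lemma dist_subg: "subg K' K \<Longrightarrow> reach K' x y \<Longrightarrow> dist K x y \<le> dist K' x y"
proof -
  assume s: "subg K' K" "reach K' x y"
  from dist_path[OF s(2)] obtain vs es where "wkuv K' x y vs es" "length es = dist K' x y" by blast
  then show ?thesis using dist_le wkuv_subg[OF s(1)] by metis
qed

lemma U_subg: "subg K' K \<Longrightarrow> U K vs es \<Longrightarrow> wk K' vs es \<Longrightarrow> U K' vs es"
proof -
  assume s: "subg K' K" and u: "U K vs es" and w: "wk K' vs es"
  have w': "wkuv K' (hd vs) (last vs) vs es" using w unfolding wkuv_def by simp
  have "dist K (hd vs) (last vs) \<le> dist K' (hd vs) (last vs)" using dist_subg[OF s wkuv_reach[OF w']] .
  moreover have "dist K' (hd vs) (last vs) \<le> length es" using dist_le[OF w'] .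
  ultimately have L: "length es = dist K' (hd vs) (last vs)" using u unfolding U_def by simp
  have "ws = vs \<and> fs = es" if "wkuv K' (hd vs) (last vs) ws fs" "length fs \<le> length es" for ws fs
    using U_walk_eq[OF u wkuv_subg[OF s that(1)] that(2)] .
  then show ?thesis using u w L unfolding U_def by blast
qed

section \<open>Deleting an isolated vertex\<close>

locale vdel =
  fixes K K' :: "('v, 'e) mgraph" and v :: 'v
  assumes V': "verts K' = verts K - {v}" and E': "edges K' = edges K" and N': "ends K' = ends K"
    and iso: "\<forall>f\<in>edges K. v \<notin> ends K f"
begin

lemma wk_to': "wk K vs es \<Longrightarrow> hd vs \<noteq> v \<Longrightarrow> wk K' vs es"
proof (induction es arbitrary: vs)
  case Nil
  then show ?case using V' by (cases vs; cases "tl vs") auto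
next
  case (Cons f es)
  then obtain x w rest where vs: "vs = x # w # rest" by (cases vs; cases "tl vs") auto
  then have "w \<noteq> v" using iso Cons.prems by auto
  then show ?case using Cons vs V' E' N' by auto
qed

lemma sub: "subg K' K" unfolding subg_def using V' E' N' by auto

lemma wkuv_iff: "x \<noteq> v \<Longrightarrow> wkuv K x y vs es \<longleftrightarrow> wkuv K' x y vs es"
  using wk_to' wk_subg[OF sub] unfolding wkuv_def by blast

lemma reach_iff: "x \<noteq> v \<Longrightarrow> reach K x y \<longleftrightarrow> reach K' x y"
  unfolding reach_def using wkuv_iff by blast

lemma dist_iff: "x \<noteq> v \<Longrightarrow> dist K x y = dist K' x y"
  unfolding dist_def using wkuv_iff by simp

lemma U_iff: "hd vs \<noteq> v \<Longrightarrow> U K vs es \<longleftrightarrow> U K' vs es"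
proof -
  assume h: "hd vs \<noteq> v"
  have "wk K vs es \<longleftrightarrow> wk K' vs es" using wk_to' wk_subg[OF sub] h by blast
  then show ?thesis unfolding U_def using wkuv_iff[OF h] dist_iff[OF h] by simp
qed

lemma hasu_iff: "x \<noteq> v \<Longrightarrow> hasu K x y \<longleftrightarrow> hasu K' x y"
  unfolding hasu_def using U_iff by blast

lemma val_iff: "x \<noteq> v \<Longrightarrow> val K x y = val K' x y"
  unfolding val_def using hasu_iff dist_iff by simp

lemma cmp_iff: "u \<noteq> v \<Longrightarrow> cmp K u = cmp K' u"
  unfolding cmp_def using reach_iff[of u] by auto

lemma Psi_le:
  assumes "finite (verts K)" "verts K' \<noteq> {}"
  shows "Psi K' \<le> Psi K"
proof (rule Psi_mono)
  show "finite (verts K)" "finite (verts K')" "verts K' \<noteq> {}" using assms V' by auto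
  fix u' assume u': "u' \<in> verts K'"
  then have "u' \<noteq> v" "u' \<in> verts K" using V' by auto
  have "val K x y + card (cmp K' u') \<le> val K' x y + card (cmp K u')" if "x \<in> cmp K u'" for x y
  proof -
    have "x \<in> cmp K' u'" using that cmp_iff[OF \<open>u' \<noteq> v\<close>] by simp
    then have "x \<noteq> v" using cmp_sub[of K' u'] V' by auto
    then show ?thesis using val_iff cmp_iff[OF \<open>u' \<noteq> v\<close>] by simp
  qed
  then show "\<exists>u\<in>verts K. \<forall>x\<in>cmp K u. \<forall>y\<in>cmp K u. \<exists>x'\<in>cmp K' u'. \<exists>y'\<in>cmp K' u'.
       val K x y + card (cmp K' u') \<le> val K' x' y' + card (cmp K u)"
    using \<open>u' \<in> verts K\<close> cmp_iff[OF \<open>u' \<noteq> v\<close>] by blast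
qed

end


lemma wk_reach_last: "wk K vs es \<Longrightarrow> z \<in> set vs \<Longrightarrow> reach K z (last vs)"
proof -
  assume "wk K vs es" "z \<in> set vs"
  then have "wk K (rev vs) (rev es)" "z \<in> set (rev vs)" using wk_rev by auto
  from wk_reach[OF this] have "reach K (hd (rev vs)) z" .
  then show ?thesis using reach_sym \<open>wk K vs es\<close> wk_nonempty by (metis hd_rev)
qed

lemma cmp_closed: "z \<in> cmp K u \<Longrightarrow> reach K z w \<Longrightarrow> w \<in> cmp K u"
  unfolding cmp_def using reach_trans by fastforce

lemma cmp_closed': "z \<in> cmp K u \<Longrightarrow> reach K w z \<Longrightarrow> w \<in> cmp K u"
  using cmp_closed reach_sym by fastforce

lemma get_Q:
  assumes "reach K x y"
  obtains vs es where "wkuv K x y vs es" "distinct vs" "length es = dist K x y" "hasu K x y \<Longrightarrow> U K vs es"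
proof (cases "hasu K x y")
  case True
  then obtain vs es where u: "U K vs es" "hd vs = x" "last vs = y" unfolding hasu_def by blast
  show ?thesis by (rule that[of vs es]) (use u in \<open>auto simp: U_def wkuv_def\<close>)
next
  case False
  from dist_path[OF assms] obtain vs es where "wkuv K x y vs es" "distinct vs" "length es = dist K x y" by blast
  then show ?thesis using that False by blast
qed

lemma count_out:
  assumes "finite A" "set vs \<subseteq> A" "distinct vs"
  shows "length vs \<le> card A"
  using card_mono[OF assms(1,2)] distinct_card[OF assms(3)] by simp

section \<open>Deleting an edge\<close>

locale edel =
  fixes K K' :: "('v, 'e) mgraph" and e :: 'e
  assumes V': "verts K' = verts K" and E': "edges K' = edges K - {e}" and N': "ends K' = ends K"
    and fin: "finite (verts K)"
begin

lemma sub: "subg K' K" unfolding subg_def using V' E' N' by auto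

lemma wk_to': "wk K vs es \<Longrightarrow> e \<notin> set es \<Longrightarrow> wk K' vs es"
proof (induction es arbitrary: vs)
  case Nil
  then show ?case using V' by (cases vs; cases "tl vs") auto
next
  case (Cons f es)
  then obtain x w rest where vs: "vs = x # w # rest" by (cases vs; cases "tl vs") auto
  then show ?case using Cons vs V' E' N' by auto
qed

lemma cmp_subset: "cmp K' u \<subseteq> cmp K u"
  unfolding cmp_def reach_def using wkuv_subg[OF sub] by blast

lemma pair:
  assumes u: "u \<in> verts K" and xy: "x \<in> cmp K u" "y \<in> cmp K u"
  shows "\<exists>x'\<in>cmp K' u. \<exists>y'\<in>cmp K' u. val K x y \<le> val K' x' y' + card (cmp K u - cmp K' u)"
proof -
  define C where "C = cmp K u"
  define C' where "C' = cmp K' u"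
  have clC: "\<And>z w. z \<in> C \<Longrightarrow> reach K z w \<Longrightarrow> w \<in> C" unfolding C_def by (rule cmp_closed)
  have clC': "\<And>z w. z \<in> C' \<Longrightarrow> reach K' z w \<Longrightarrow> w \<in> C'" unfolding C'_def by (rule cmp_closed)
  have clC'': "\<And>z w. z \<in> C' \<Longrightarrow> reach K' w z \<Longrightarrow> w \<in> C'" unfolding C'_def by (rule cmp_closed')
  have rC': "\<And>a b. a \<in> C' \<Longrightarrow> b \<in> C' \<Longrightarrow> reach K' a b" unfolding C'_def by (rule cmp_reach)
  have xC: "x \<in> C" using xy(1) unfolding C_def .
  have uC': "u \<in> C'" unfolding C'_def using cmp_self[of u K'] u V' by simp
  have finD: "finite (C - C')" unfolding C_def using finite_subset[OF cmp_sub fin] by auto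
  have rxy: "reach K x y" using cmp_reach[OF xy] .
  obtain vs es where Q: "wkuv K x y vs es" "distinct vs" "length es = dist K x y" "hasu K x y \<Longrightarrow> U K vs es"
    using get_Q[OF rxy] by blast
  have wQ: "wk K vs es" "hd vs = x" "last vs = y" using Q(1) unfolding wkuv_def by auto
  have vsC: "set vs \<subseteq> C"
  proof
    fix z assume "z \<in> set vs"
    then have "reach K x z" using wk_reach[OF wQ(1)] wQ(2) by blast
    then show "z \<in> C" using clC[OF xC] by blast
  qed
  have val_le: "val K x y \<le> dist K x y + 1" unfolding val_def by simp
  have cnt: "\<exists>x'\<in>C'. \<exists>y'\<in>C'. val K x y \<le> val K' x' y' + card (C - C')" if "set vs \<inter> C' = {}"
  proof -
    have "length vs \<le> card (C - C')" using count_out[OF finD _ Q(2)] vsC that by blast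
    then have "val K x y \<le> card (C - C')" using val_le wk_len[OF wQ(1)] Q(3) by simp
    then have "val K x y \<le> val K' u u + card (C - C')" by simp
    then show ?thesis using uC' by blast
  qed
  have main: "\<exists>x'\<in>C'. \<exists>y'\<in>C'. val K x y \<le> val K' x' y' + card (C - C')"
  proof (cases "e \<in> set es")
    case False
    then have w': "wk K' vs es" using wk_to' wQ(1) by blast
    show ?thesis
    proof (cases "x \<in> C'")
      case True
      have r': "reach K' x y" using w' wQ unfolding reach_def wkuv_def by blast
      then have "y \<in> C'" using clC'[OF True] by blast
      have "dist K x y \<le> dist K' x y" using dist_subg[OF sub r'] .
      moreover have "hasu K' x y" if "hasu K x y"
        using U_subg[OF sub Q(4)[OF that] w'] wQ unfolding hasu_def by blast
      ultimately have "val K x y \<le> val K' x y" unfolding val_def by auto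
      then have "val K x y \<le> val K' x y + card (C - C')" by simp
        then show ?thesis using True \<open>y \<in> C'\<close> by blast
    next
      case False
      have "set vs \<inter> C' = {}"
      proof (rule ccontr)
        assume "set vs \<inter> C' \<noteq> {}"
        then obtain z where "z \<in> set vs" "z \<in> C'" by blast
        then have "reach K' x z" using wk_reach[OF w'] wQ(2) by blast
        then have "x \<in> C'" using clC''[OF \<open>z \<in> C'\<close>] by blast
        then show False using False by simp
      qed
      then show ?thesis using cnt by blast
    qed
  next
    case True
    then obtain es1 es2 where es: "es = es1 @ e # es2" "e \<notin> set es1" using split_list_first by metis
    from wk_split[of K vs es1 e es2] wQ(1) es(1) obtain vs1 vs2 where
      S: "vs = vs1 @ vs2" "wk K vs1 es1" "wk K vs2 es2" "e \<in> edges K" "ends K e = {last vs1, hd vs2}" by blast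
    have ne: "vs1 \<noteq> []" "vs2 \<noteq> []" using S wk_nonempty by auto
    have hx: "hd vs1 = x" "last vs2 = y" using wQ S(1) ne by auto
    have "distinct es" using wk_distinct_edges[OF wQ(1) Q(2)] .
    then have "e \<notin> set es2" using es by simp
    have w1: "wk K' vs1 es1" using wk_to' S(2) es(2) by blast
    have w2: "wk K' vs2 es2" using wk_to' S(3) \<open>e \<notin> set es2\<close> by blast
    have L: "length (es1 @ e # es2) = dist K (hd vs1) (last vs2)" using Q(3) es hx by simp
    note sd = split_dist[OF S(2,3,4,5) L]
    have Uparts: "U K' vs1 es1 \<and> U K' vs2 es2" if "hasu K x y"
    proof -
      have "U K (vs1 @ vs2) (es1 @ e # es2)" using Q(4)[OF that] S(1) es(1) by simp
      from U_split[OF this S(2,3,4,5)] show ?thesis using U_subg[OF sub] w1 w2 by blast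
    qed
    have lens: "length vs1 = Suc (length es1)" "length vs2 = Suc (length es2)" using S wk_len by auto
    have valxy: "val K x y = length es1 + 1 + length es2 + (if hasu K x y then 1 else 0)"
      unfolding val_def using Q(3) es by simp
    show ?thesis
    proof (cases "reach K' x y")
      case True
      show ?thesis
      proof (cases "x \<in> C'")
        case True
        have "y \<in> C'" using clC'[OF True \<open>reach K' x y\<close>] .
        from dist_path[OF \<open>reach K' x y\<close>] obtain rs fs where
          R: "wkuv K' x y rs fs" "length fs = dist K' x y" by blast
        have "e \<notin> set fs" using R(1) wk_edges E' unfolding wkuv_def by fastforce
        have Rk: "wkuv K x y rs fs" using wkuv_subg[OF sub R(1)] .
        have "dist K x y \<le> length fs" using dist_le[OF Rk] .
        moreover have "length fs \<noteq> dist K x y" if "hasu K x y"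
        proof
          assume "length fs = dist K x y"
          then have "rs = vs \<and> fs = es" using U_walk_eq[OF Q(4)[OF that]] Rk wQ Q(3) by simp
          then show False using \<open>e \<notin> set fs\<close> \<open>e \<in> set es\<close> by simp
        qed
        ultimately have "val K x y \<le> dist K' x y" unfolding val_def using Q(3) R(2) by auto
        then have "val K x y \<le> val K' x y" unfolding val_def by simp
        then have "val K x y \<le> val K' x y + card (C - C')" by simp
        then show ?thesis using True \<open>y \<in> C'\<close> by blast
      next
        case False
        have "set vs \<inter> C' = {}"
        proof (rule ccontr)
          assume "set vs \<inter> C' \<noteq> {}"
          then obtain z where z: "z \<in> set vs" "z \<in> C'" by blast
          have "reach K' x z"
          proof (cases "z \<in> set vs1")
            case True
            then show ?thesis using wk_reach[OF w1] hx by blast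
          next
            case False
            then have "z \<in> set vs2" using z S(1) by simp
            then have "reach K' z y" using wk_reach_last[OF w2] hx by blast
            then show ?thesis using reach_trans[OF \<open>reach K' x y\<close> reach_sym] by blast
          qed
          then have "x \<in> C'" using clC''[OF z(2)] by blast
          then show False using False by simp
        qed
        then show ?thesis using cnt by blast
      qed
    next
      case False
      note nr = False
      show ?thesis
      proof (cases "x \<in> C'")
        case True
        have dis2: "set vs2 \<inter> C' = {}"
        proof (rule ccontr)
          assume "set vs2 \<inter> C' \<noteq> {}"
          then obtain z where z: "z \<in> set vs2" "z \<in> C'" by blast
          then have "reach K' z y" using wk_reach_last[OF w2] hx by blast
          then have "y \<in> C'" using clC'[OF z(2)] by blast
          then have "reach K' x y" using rC'[OF True] by blast
          then show False using nr by simp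
        qed
        have "set vs2 \<subseteq> C - C'" using dis2 vsC S(1) by auto
        then have c2: "length vs2 \<le> card (C - C')" using count_out[OF finD] Q(2) S(1) by simp
        have "reach K' x (last vs1)" using wk_reach[OF w1, of "last vs1"] hx ne(1) by simp
        then have pC: "last vs1 \<in> C'" using clC'[OF True] by blast
        have rp: "reach K' x (last vs1)" using w1 hx unfolding reach_def wkuv_def by blast
        have "dist K x (last vs1) \<le> dist K' x (last vs1)" using dist_subg[OF sub rp] .
        moreover have "hasu K' x (last vs1)" if "hasu K x y"
          using Uparts[OF that] hx unfolding hasu_def by blast
        ultimately have "length es1 + (if hasu K x y then 1 else 0) \<le> val K' x (last vs1)"
          unfolding val_def using sd hx by auto
        then have "val K x y \<le> val K' x (last vs1) + card (C - C')" using valxy c2 lens by simp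
        then show ?thesis using True pC by blast
      next
        case False
        note nx = False
        show ?thesis
        proof (cases "y \<in> C'")
          case True
          have dis1: "set vs1 \<inter> C' = {}"
          proof (rule ccontr)
            assume "set vs1 \<inter> C' \<noteq> {}"
            then obtain z where z: "z \<in> set vs1" "z \<in> C'" by blast
            then have "reach K' x z" using wk_reach[OF w1] hx by blast
            then have "x \<in> C'" using clC''[OF z(2)] by blast
            then show False using nx by simp
          qed
          have "set vs1 \<subseteq> C - C'" using dis1 vsC S(1) by auto
          then have c1: "length vs1 \<le> card (C - C')" using count_out[OF finD] Q(2) S(1) by simp
          have "reach K' (hd vs2) y" using wk_reach_last[OF w2, of "hd vs2"] hx ne(2) by simp
          then have qC: "hd vs2 \<in> C'" using clC''[OF True] by blast
          have rq: "reach K' (hd vs2) y" using w2 hx unfolding reach_def wkuv_def by blast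
          have "dist K (hd vs2) y \<le> dist K' (hd vs2) y" using dist_subg[OF sub rq] .
          moreover have "hasu K' (hd vs2) y" if "hasu K x y"
            using Uparts[OF that] hx unfolding hasu_def by blast
          ultimately have "length es2 + (if hasu K x y then 1 else 0) \<le> val K' (hd vs2) y"
            unfolding val_def using sd hx by auto
          then have "val K x y \<le> val K' (hd vs2) y + card (C - C')" using valxy c1 lens by simp
          then show ?thesis using True qC by blast
        next
          case False
          have "set vs \<inter> C' = {}"
          proof (rule ccontr)
            assume "set vs \<inter> C' \<noteq> {}"
            then obtain z where z: "z \<in> set vs" "z \<in> C'" by blast
            show False
            proof (cases "z \<in> set vs1")
              case True
              then have "reach K' x z" using wk_reach[OF w1] hx by blast
              then show False using clC''[OF z(2)] nx by blast
            next
              case False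
              then have "z \<in> set vs2" using z S(1) by simp
              then have "reach K' z y" using wk_reach_last[OF w2] hx by blast
              then show False using clC'[OF z(2)] \<open>y \<notin> C'\<close> by blast
            qed
          qed
          then show ?thesis using cnt by blast
        qed
      qed
    qed
  qed
  then show ?thesis unfolding C_def C'_def .
qed

lemma Psi_le: "Psi K' \<le> Psi K" if "verts K \<noteq> {}"
proof (rule Psi_mono)
  show "finite (verts K)" "finite (verts K')" "verts K' \<noteq> {}" using fin that V' by auto
  fix u' assume u': "u' \<in> verts K'"
  then have uK: "u' \<in> verts K" using V' by simp
  have fC: "finite (cmp K u')" using finite_subset[OF cmp_sub fin] .
  have cc: "card (cmp K u') = card (cmp K' u') + card (cmp K u' - cmp K' u')"
    using card_Diff_subset[OF finite_subset[OF cmp_subset fC] cmp_subset] card_mono[OF fC cmp_subset] by simp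
  have "\<forall>x\<in>cmp K u'. \<forall>y\<in>cmp K u'. \<exists>x'\<in>cmp K' u'. \<exists>y'\<in>cmp K' u'.
       val K x y + card (cmp K' u') \<le> val K' x' y' + card (cmp K u')"
  proof (intro ballI)
    fix x y assume "x \<in> cmp K u'" "y \<in> cmp K u'"
    from pair[OF uK this] obtain x' y' where "x' \<in> cmp K' u'" "y' \<in> cmp K' u'"
      "val K x y \<le> val K' x' y' + card (cmp K u' - cmp K' u')" by blast
    moreover have "val K x y + card (cmp K' u') \<le> val K' x' y' + card (cmp K u')"
      using cc calculation(3) by linarith
    ultimately show "\<exists>x'\<in>cmp K' u'. \<exists>y'\<in>cmp K' u'. val K x y + card (cmp K' u') \<le> val K' x' y' + card (cmp K u')"
      by blast
  qed
  then show "\<exists>u\<in>verts K. \<forall>x\<in>cmp K u. \<forall>y\<in>cmp K u. \<exists>x'\<in>cmp K' u'. \<exists>y'\<in>cmp K' u'.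
       val K x y + card (cmp K' u') \<le> val K' x' y' + card (cmp K u)" using uK by blast
qed

end

lemma wk_Cons: "wk K ws fs \<Longrightarrow> f \<in> edges K \<Longrightarrow> ends K f = {v, hd ws} \<Longrightarrow> v \<in> verts K \<Longrightarrow> wk K (v # ws) (f # fs)"
  by (cases ws; cases fs) auto

lemma card2_eq: "card S = 2 \<Longrightarrow> p \<in> S \<Longrightarrow> q \<in> S \<Longrightarrow> p \<noteq> q \<Longrightarrow> S = {p, q}"
  by (auto simp: card_2_iff)

locale ctr =
  fixes K K' :: "('v, 'e) mgraph" and e :: 'e and a b :: 'v and sg :: "'v \<Rightarrow> 'v"
  assumes sg: "sg = (\<lambda>x. if x = b then a else x)"
    and V': "verts K' = verts K - {b}" and E': "edges K' = edges K - {e}" and N': "ends K' = (\<lambda>f. sg ` ends K f)"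
    and eE: "e \<in> edges K" and eab: "ends K e = {a, b}" and ab: "a \<noteq> b"
    and mK: "mgraph K" and mK': "mgraph K'"
begin

lemma fin: "finite (verts K)" using mK unfolding mgraph_def by auto

lemma endsV: "f \<in> edges K \<Longrightarrow> ends K f \<subseteq> verts K" using mK unfolding mgraph_def by auto

lemma ends2: "f \<in> edges K \<Longrightarrow> card (ends K f) = 2" using mK unfolding mgraph_def by auto

lemma ends2': "f \<in> edges K' \<Longrightarrow> card (ends K' f) = 2" using mK' unfolding mgraph_def by auto

lemma aV: "a \<in> verts K" and bV: "b \<in> verts K" using endsV[OF eE] eab by auto

lemma sg_b: "sg b = a" and sg_nb: "x \<noteq> b \<Longrightarrow> sg x = x" using sg by auto

lemma sg_a: "sg a = a" using sg_nb ab by simp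

lemma sg_V: "x \<in> verts K \<Longrightarrow> sg x \<in> verts K'"
  using V' aV ab sg by auto

lemma sg_eq: "sg x = sg y \<Longrightarrow> x \<noteq> y \<Longrightarrow> {x, y} = {a, b} \<and> sg x = a"
  using sg ab by (auto split: if_splits)

lemma proj: "wk K vs es \<Longrightarrow> \<exists>vs' es'. wk K' vs' es' \<and> hd vs' = sg (hd vs) \<and> last vs' = sg (last vs) \<and> length es' \<le> length es"
proof (induction es arbitrary: vs)
  case Nil
  then obtain x where "vs = [x]" "x \<in> verts K" by (cases vs; cases "tl vs") auto
  then show ?case using sg_V by (intro exI[of _ "[sg x]"] exI[of _ "[]"]) auto
next
  case (Cons f es)
  then obtain x w rest where vs: "vs = x # w # rest" by (cases vs; cases "tl vs") auto
  then have h: "f \<in> edges K" "ends K f = {x, w}" "x \<in> verts K" "wk K (w # rest) es" using Cons.prems by auto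
  from Cons.IH[OF h(4)] obtain vs' es' where
    W: "wk K' vs' es'" "hd vs' = sg w" "last vs' = sg (last (w # rest))" "length es' \<le> length es" by auto
  show ?case
  proof (cases "f = e")
    case True
    then have "{x, w} = {a, b}" using h eab by simp
    then have "sg x = sg w" using sg by (auto simp: doubleton_eq_iff)
    then show ?thesis using W vs by (intro exI[of _ vs'] exI[of _ es']) auto
  next
    case False
    have "wk K' (sg x # vs') (f # es')"
      using W h False E' N' sg_V by (intro wk_Cons) auto
    moreover have "vs' \<noteq> []" using W wk_nonempty by auto
    ultimately show ?thesis using W vs by (intro exI[of _ "sg x # vs'"] exI[of _ "f # es'"]) auto
  qed
qed

lemma lift: "wk K' vs' es' \<Longrightarrow> distinct vs' \<Longrightarrow> x \<in> verts K \<Longrightarrow> y \<in> verts K \<Longrightarrow> sg x = hd vs' \<Longrightarrow> sg y = last vs' \<Longrightarrow>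
   \<exists>vs es. wkuv K x y vs es \<and> filter (\<lambda>f. f \<noteq> e) es = es' \<and> length es \<le> length es' + (if a \<in> set vs' then 1 else 0)"
proof (induction es' arbitrary: vs' x)
  case Nil
  then obtain v' where vs': "vs' = [v']" by (cases vs'; cases "tl vs'") auto
  show ?case
  proof (cases "x = y")
    case True
    then show ?thesis using Nil unfolding wkuv_def by (intro exI[of _ "[x]"] exI[of _ "[]"]) auto
  next
    case False
    have "sg x = sg y" using Nil vs' by simp
    from sg_eq[OF this False] have xy: "{x, y} = {a, b}" "v' = a" using Nil vs' by auto
    have "wk K [x, y] [e]" using eE eab xy Nil by auto
    then show ?thesis using xy vs' unfolding wkuv_def by (intro exI[of _ "[x, y]"] exI[of _ "[e]"]) auto
  qed
next
  case (Cons f es')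
  then obtain v' w' rest where vs': "vs' = v' # w' # rest" by (cases vs'; cases "tl vs'") auto
  then have h: "f \<in> edges K" "f \<noteq> e" "ends K' f = {v', w'}" "wk K' (w' # rest) es'"
    using Cons.prems E' by auto
  have "f \<in> edges K'" using Cons.prems(1) vs' by simp
  from ends2'[OF this] have "card (ends K' f) = 2" .
  then have "v' \<noteq> w'" using h(3) by auto
  have img: "sg ` ends K f = {v', w'}" using h(3) N' by simp
  obtain p where p: "p \<in> ends K f" "sg p = v'" using img by (metis imageE insertI1)
  obtain q where q: "q \<in> ends K f" "sg q = w'" using img by (metis imageE insertI1 insert_commute)
  have "p \<noteq> q" using p q \<open>v' \<noteq> w'\<close> by auto
  have fpq: "ends K f = {p, q}" using card2_eq[OF ends2[OF h(1)] p(1) q(1) \<open>p \<noteq> q\<close>] .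
  have qV: "q \<in> verts K" and pV: "p \<in> verts K" using endsV[OF h(1)] p q by auto
  have dt: "distinct (w' # rest)" using Cons.prems vs' by simp
  from Cons.IH[OF h(4) dt qV Cons.prems(4)] q(2) Cons.prems(6) vs' obtain ws fs where
    W: "wkuv K q y ws fs" "filter (\<lambda>f. f \<noteq> e) fs = es'" "length fs \<le> length es' + (if a \<in> set (w' # rest) then 1 else 0)"
    by auto
  have W1: "wk K (p # ws) (f # fs)" using W(1) h(1) fpq pV unfolding wkuv_def by (intro wk_Cons) auto
  have ne: "ws \<noteq> []" using W(1) wk_nonempty unfolding wkuv_def by auto
  show ?case
  proof (cases "x = p")
    case True
    then have "wkuv K x y (p # ws) (f # fs)" using W1 W(1) ne unfolding wkuv_def by auto
    moreover have "filter (\<lambda>f. f \<noteq> e) (f # fs) = f # es'" using W(2) h(2) by simp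
    moreover have "length (f # fs) \<le> length (f # es') + (if a \<in> set vs' then 1 else 0)"
      using W(3) vs' by (auto split: if_splits)
    ultimately show ?thesis by blast
  next
    case False
    have "sg x = sg p" using Cons.prems(5) vs' p(2) by simp
    from sg_eq[OF this False] have xp: "{x, p} = {a, b}" "v' = a" using Cons.prems(5) vs' by auto
    have "a \<notin> set (w' # rest)" using Cons.prems(2) vs' xp(2) by auto
    have "wk K (x # p # ws) (e # f # fs)" using W1 eE eab xp Cons.prems(3) by (rule_tac wk_Cons) auto
    then have "wkuv K x y (x # p # ws) (e # f # fs)" using W(1) ne unfolding wkuv_def by auto
    moreover have "filter (\<lambda>f. f \<noteq> e) (e # f # fs) = f # es'" using W(2) h(2) by simp
    moreover have "length (e # f # fs) \<le> length (f # es') + (if a \<in> set vs' then 1 else 0)"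
      using W(3) vs' xp(2) \<open>a \<notin> set (w' # rest)\<close> by auto
    ultimately show ?thesis by blast
  qed
qed


lemma reach_proj: "reach K x y \<Longrightarrow> reach K' (sg x) (sg y)"
  unfolding reach_def wkuv_def using proj by blast

lemma reach_lift: "reach K' x' y' \<Longrightarrow> x \<in> verts K \<Longrightarrow> y \<in> verts K \<Longrightarrow> sg x = x' \<Longrightarrow> sg y = y' \<Longrightarrow> reach K x y"
proof -
  assume r: "reach K' x' y'" and h: "x \<in> verts K" "y \<in> verts K" "sg x = x'" "sg y = y'"
  from dist_path[OF r] obtain vs es where "wkuv K' x' y' vs es" "distinct vs" by blast
  from lift[of vs es x y] this h show ?thesis unfolding wkuv_def reach_def by auto
qed

lemma cmp_img: assumes u: "u \<in> verts K'" shows "cmp K' u = sg ` cmp K u"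
proof
  have ub: "u \<noteq> b" "u \<in> verts K" "sg u = u" using u V' sg_nb by auto
  show "sg ` cmp K u \<subseteq> cmp K' u"
    using reach_proj ub unfolding cmp_def by fastforce
  show "cmp K' u \<subseteq> sg ` cmp K u"
  proof
    fix z assume "z \<in> cmp K' u"
    then have r: "reach K' u z" unfolding cmp_def by simp
    then have "z \<in> verts K'" using reach_verts by fastforce
    then have z: "z \<in> verts K" "sg z = z" using V' sg_nb by auto
    have "reach K u z" using reach_lift[OF r ub(2) z(1) ub(3) z(2)] .
    then show "z \<in> sg ` cmp K u" using z(2) unfolding cmp_def by (metis image_eqI mem_Collect_eq)
  qed
qed

lemma reach_ab: "reach K b a"
proof -
  have "wk K [b, a] [e]" using eE eab aV bV by (auto simp: insert_commute)
  then show ?thesis unfolding reach_def wkuv_def by fastforce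
qed

lemma cmp_card: assumes u: "u \<in> verts K'"
  shows "card (cmp K u) = card (cmp K' u) + (if a \<in> cmp K' u then 1 else 0)"
proof -
  have fC: "finite (cmp K u)" using finite_subset[OF cmp_sub fin] .
  show ?thesis
  proof (cases "b \<in> cmp K u")
    case True
    then have aC: "a \<in> cmp K u" using cmp_closed reach_ab by fastforce
    have "sg ` cmp K u = cmp K u - {b}"
    proof
      show "sg ` cmp K u \<subseteq> cmp K u - {b}" using aC ab sg by auto
      show "cmp K u - {b} \<subseteq> sg ` cmp K u"
      proof
        fix z assume "z \<in> cmp K u - {b}"
        then show "z \<in> sg ` cmp K u" using sg_nb by (metis DiffE image_eqI singletonI)
      qed
    qed
    moreover have "a \<in> sg ` cmp K u" using aC sg_a by (metis image_eqI)
    ultimately show ?thesis using cmp_img[OF u] card_Diff_singleton[OF True] fC True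
      by (simp add: card_gt_0_iff) (metis Suc_pred card_gt_0_iff emptyE)
  next
    case False
    have img: "sg ` cmp K u = cmp K u"
    proof -
      have "\<And>z. z \<in> cmp K u \<Longrightarrow> sg z = z" using False sg_nb by metis
      then show ?thesis by (metis image_cong image_ident)
    qed
    have "a \<notin> cmp K u"
    proof
      assume "a \<in> cmp K u"
      then have "b \<in> cmp K u" using cmp_closed' reach_ab by fastforce
      then show False using False by simp
    qed
    then show ?thesis using cmp_img[OF u] img by simp
  qed
qed

lemma pair:
  assumes u: "u \<in> verts K'" and xy: "x \<in> cmp K u" "y \<in> cmp K u"
  shows "sg x \<in> cmp K' u \<and> sg y \<in> cmp K' u \<and> val K x y \<le> val K' (sg x) (sg y) + (if a \<in> cmp K' u then 1 else 0)"
proof -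
  define C' where "C' = cmp K' u"
  define \<beta> where "\<beta> = (if a \<in> C' then 1 else (0::nat))"
  have xC: "sg x \<in> C'" "sg y \<in> C'" using xy cmp_img[OF u] unfolding C'_def by auto
  have xyV: "x \<in> verts K" "y \<in> verts K" using xy cmp_sub[of K u] by auto
  have rxy: "reach K x y" using cmp_reach[OF xy] .
  have r': "reach K' (sg x) (sg y)" using reach_proj[OF rxy] .
  from dist_path[OF r'] obtain qs gs where Q: "wkuv K' (sg x) (sg y) qs gs" "distinct qs" "length gs = dist K' (sg x) (sg y)"
    by blast
  have qw: "wk K' qs gs" "hd qs = sg x" "last qs = sg y" using Q(1) unfolding wkuv_def by auto
  have liftb: "\<exists>vs es. wkuv K x y vs es \<and> filter (\<lambda>f. f \<noteq> e) es = fs \<and> length es \<le> length fs + \<beta>"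
    if "wkuv K' (sg x) (sg y) ws fs" "distinct ws" for ws fs
  proof -
    have w: "wk K' ws fs" "hd ws = sg x" "last ws = sg y" using that unfolding wkuv_def by auto
    have "a \<in> set ws \<Longrightarrow> a \<in> C'"
    proof -
      assume "a \<in> set ws"
      then have "reach K' (sg x) a" using wk_reach[OF w(1), of a] w(2) by simp
      then show "a \<in> C'" using cmp_closed[OF xC(1)[unfolded C'_def]] unfolding C'_def by blast
    qed
    then have "(if a \<in> set ws then 1 else 0) \<le> \<beta>" unfolding \<beta>_def by auto
    with lift[OF w(1) that(2) xyV w(2)[symmetric] w(3)[symmetric]] show ?thesis by fastforce
  qed
  from liftb[OF Q(1,2)] obtain vs es where L: "wkuv K x y vs es" "filter (\<lambda>f. f \<noteq> e) es = gs" "length es \<le> length gs + \<beta>"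
    by blast
  have Dle: "dist K x y \<le> dist K' (sg x) (sg y) + \<beta>" using dist_le[OF L(1)] L(3) Q(3) by simp
  have "val K x y \<le> val K' (sg x) (sg y) + \<beta>"
  proof (cases "hasu K x y")
    case True
    then obtain ps hs where P: "U K ps hs" "hd ps = x" "last ps = y" unfolding hasu_def by blast
    have PD: "length hs = dist K x y" using P unfolding U_def by simp
    show ?thesis
    proof (cases "dist K x y = dist K' (sg x) (sg y) + \<beta>")
      case True
      have eqP: "vs' = ps \<and> es' = hs" if "wkuv K x y vs' es'" "length es' \<le> length gs + \<beta>" for vs' es'
        using U_walk_eq[OF P(1)] that P(2,3) PD True Q(3) by simp
      have "U K' qs gs"
      proof -
        have "ws = qs \<and> fs = gs" if "wkuv K' (hd qs) (last qs) ws fs" "length fs \<le> length gs" for ws fs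
        proof -
          have "length fs \<le> dist K' (sg x) (sg y)" using that Q(3) by simp
          from wk_min_distinct[OF _ this] that(1) qw have d: "distinct ws" "length fs = length gs"
            using Q(3) by auto
          have "wkuv K' (sg x) (sg y) ws fs" using that(1) qw by simp
          from liftb[OF this d(1)] obtain vs2 es2 where
            L2: "wkuv K x y vs2 es2" "filter (\<lambda>f. f \<noteq> e) es2 = fs" "length es2 \<le> length fs + \<beta>" by auto
          have "vs2 = ps \<and> es2 = hs" using eqP[OF L2(1)] L2(3) d(2) by simp
          moreover have "vs = ps \<and> es = hs" using eqP[OF L(1) L(3)] .
          ultimately have "fs = gs" using L(2) L2(2) by simp
          moreover have "ws = qs" using wk_det[of K' ws fs qs] that(1) qw \<open>fs = gs\<close> unfolding wkuv_def by auto
          ultimately show ?thesis by simp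
        qed
        then show ?thesis unfolding U_def using qw Q(2,3) by auto
      qed
      then have "hasu K' (sg x) (sg y)" using qw unfolding hasu_def by blast
      then show ?thesis unfolding val_def using True \<open>hasu K x y\<close> by simp
    next
      case False
      then show ?thesis unfolding val_def using Dle by auto
    qed
  next
    case False
    then show ?thesis unfolding val_def using Dle by auto
  qed
  then show ?thesis using xC unfolding C'_def \<beta>_def by simp
qed

lemma Psi_le: "Psi K' \<le> Psi K"
proof (rule Psi_mono)
  show "finite (verts K)" "finite (verts K')" "verts K' \<noteq> {}" using mK mK' unfolding mgraph_def by auto
  fix u assume u: "u \<in> verts K'"
  then have uK: "u \<in> verts K" using V' by simp
  have "\<forall>x\<in>cmp K u. \<forall>y\<in>cmp K u. \<exists>x'\<in>cmp K' u. \<exists>y'\<in>cmp K' u.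
       val K x y + card (cmp K' u) \<le> val K' x' y' + card (cmp K u)"
  proof (intro ballI)
    fix x y assume "x \<in> cmp K u" "y \<in> cmp K u"
    from pair[OF u this] cmp_card[OF u] have
      "sg x \<in> cmp K' u" "sg y \<in> cmp K' u" "val K x y + card (cmp K' u) \<le> val K' (sg x) (sg y) + card (cmp K u)"
      by auto
    then show "\<exists>x'\<in>cmp K' u. \<exists>y'\<in>cmp K' u. val K x y + card (cmp K' u) \<le> val K' x' y' + card (cmp K u)"
      by blast
  qed
  then show "\<exists>u'\<in>verts K. \<forall>x\<in>cmp K u'. \<forall>y\<in>cmp K u'. \<exists>x'\<in>cmp K' u. \<exists>y'\<in>cmp K' u.
       val K x y + card (cmp K' u) \<le> val K' x' y' + card (cmp K u')" using uK by blast
qed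

end

lemma minor_step_Psi: "minor_step K K' \<Longrightarrow> mgraph K \<Longrightarrow> Psi K' \<le> Psi K"
proof -
  assume ms: "minor_step K K'" and mK: "mgraph K"
  have mK': "mgraph K'" using ms unfolding minor_step_def by blast
  have fK: "finite (verts K)" "verts K \<noteq> {}" using mK unfolding mgraph_def by auto
  have fK': "verts K' \<noteq> {}" using mK' unfolding mgraph_def by auto
  from ms consider
    (v) v where "v \<in> verts K" "\<forall>e\<in>edges K. v \<notin> ends K e"
       "K' = \<lparr>verts = verts K - {v}, edges = edges K, ends = ends K\<rparr>"
  | (e) e where "e \<in> edges K" "K' = \<lparr>verts = verts K, edges = edges K - {e}, ends = ends K\<rparr>"
  | (c) e a b where "e \<in> edges K" "ends K e = {a, b}" "a \<noteq> b"
       "K' = \<lparr>verts = verts K - {b}, edges = edges K - {e},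
               ends = (\<lambda>e'. (\<lambda>x. if x = b then a else x) ` ends K e')\<rparr>"
    unfolding minor_step_def by blast
  then show ?thesis
  proof cases
    case v
    interpret vdel K K' v using v by unfold_locales auto
    show ?thesis using Psi_le fK fK' by blast
  next
    case e
    interpret edel K K' e using e fK by unfold_locales auto
    show ?thesis using Psi_le fK by blast
  next
    case c
    interpret ctr K K' e a b "\<lambda>x. if x = b then a else x" using c mK mK' by unfold_locales auto
    show ?thesis using Psi_le by blast
  qed
qed

lemma minor_steps_Psi: "minor_step\<^sup>*\<^sup>* K K' \<Longrightarrow> mgraph K \<Longrightarrow> Psi K' \<le> Psi K \<and> mgraph K'"
proof (induction rule: rtranclp_induct)
  case base
  then show ?case by simp
next
  case (step y z)
  then have "mgraph y" "Psi y \<le> Psi K" by auto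
  moreover have "mgraph z" using step(2) unfolding minor_step_def by blast
  moreover have "Psi z \<le> Psi y" using minor_step_Psi[OF step(2) \<open>mgraph y\<close>] .
  ultimately show ?case by simp
qed

section \<open>Isomorphism transfer\<close>

lemma iso_wk:
  assumes f: "bij_betw f (verts A) (verts B)" and g: "bij_betw g (edges A) (edges B)"
    and n: "\<forall>e\<in>edges A. ends B (g e) = f ` ends A e"
  shows "wk A vs es \<Longrightarrow> wk B (map f vs) (map g es)"
proof (induction es arbitrary: vs)
  case Nil
  then show ?case using f by (cases vs; cases "tl vs") (auto simp: bij_betw_def)
next
  case (Cons h es)
  then obtain x w rest where vs: "vs = x # w # rest" by (cases vs; cases "tl vs") auto
  then have "wk A (w # rest) es" using Cons.prems by simp
  from Cons.IH[OF this] have "wk B (f w # map f rest) (map g es)" by simp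
  then show ?case using Cons.prems vs f g n by (auto simp: bij_betw_def)
qed

lemma iso_inv:
  assumes f: "bij_betw f (verts A) (verts B)" and g: "bij_betw g (edges A) (edges B)"
    and n: "\<forall>e\<in>edges A. ends B (g e) = f ` ends A e" and m: "mgraph A"
  shows "bij_betw (inv_into (verts A) f) (verts B) (verts A)"
    "bij_betw (inv_into (edges A) g) (edges B) (edges A)"
    "\<forall>e\<in>edges B. ends A (inv_into (edges A) g e) = inv_into (verts A) f ` ends B e"
proof -
  show "bij_betw (inv_into (verts A) f) (verts B) (verts A)" using bij_betw_inv_into[OF f] .
  show "bij_betw (inv_into (edges A) g) (edges B) (edges A)" using bij_betw_inv_into[OF g] .
  show "\<forall>e\<in>edges B. ends A (inv_into (edges A) g e) = inv_into (verts A) f ` ends B e"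
  proof
    fix e' assume e': "e' \<in> edges B"
    define e where "e = inv_into (edges A) g e'"
    have eA: "e \<in> edges A" unfolding e_def using e' g by (metis bij_betw_def inv_into_into)
    have "g e = e'" unfolding e_def using e' g by (simp add: bij_betw_def f_inv_into_f)
    then have "ends B e' = f ` ends A e" using n eA by auto
    moreover have "ends A e \<subseteq> verts A" using m eA unfolding mgraph_def by auto
    ultimately have "inv_into (verts A) f ` ends B e' = ends A e"
      using f by (simp add: bij_betw_def inv_into_image_cancel)
    then show "ends A (inv_into (edges A) g e') = inv_into (verts A) f ` ends B e'" unfolding e_def by simp
  qed
qed

locale isom =
  fixes A :: "('v, 'e) mgraph" and B :: "('w, 'f) mgraph" and f g
  assumes f: "bij_betw f (verts A) (verts B)" and g: "bij_betw g (edges A) (edges B)"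
    and n: "\<forall>e\<in>edges A. ends B (g e) = f ` ends A e" and mA: "mgraph A"
begin

abbreviation "f' \<equiv> inv_into (verts A) f"
abbreviation "g' \<equiv> inv_into (edges A) g"

lemma fw: "wk A vs es \<Longrightarrow> wk B (map f vs) (map g es)" using iso_wk[OF f g n] .

lemma bw: "wk B vs es \<Longrightarrow> wk A (map f' vs) (map g' es)" using iso_wk[OF iso_inv[OF f g n mA]] .

lemma ff': "x \<in> verts A \<Longrightarrow> f' (f x) = x" using f by (simp add: bij_betw_def)

lemma f'f: "y \<in> verts B \<Longrightarrow> f (f' y) = y" using f by (simp add: bij_betw_def f_inv_into_f)

lemma g'g: "y \<in> edges B \<Longrightarrow> g (g' y) = y" using g by (simp add: bij_betw_def f_inv_into_f)

lemma map_ff': "set vs \<subseteq> verts B \<Longrightarrow> map f (map f' vs) = vs"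
  using f'f by (induction vs) auto

lemma map_gg': "set es \<subseteq> edges B \<Longrightarrow> map g (map g' es) = es"
  using g'g by (induction es) auto

lemma reach_back: "x \<in> verts A \<Longrightarrow> y \<in> verts A \<Longrightarrow> reach B (f x) (f y) \<Longrightarrow>
   reach A x y \<and> dist A x y \<le> dist B (f x) (f y)"
proof -
  assume xy: "x \<in> verts A" "y \<in> verts A" and r: "reach B (f x) (f y)"
  from dist_path[OF r] obtain vs es where W: "wkuv B (f x) (f y) vs es" "length es = dist B (f x) (f y)" by blast
  have ne: "vs \<noteq> []" using W wk_nonempty unfolding wkuv_def by auto
  have "wkuv A x y (map f' vs) (map g' es)"
    using bw W ne ff' xy unfolding wkuv_def by (auto simp: hd_map last_map)
  then show ?thesis using wkuv_reach dist_le W(2) by fastforce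
qed

lemma dist_fw: "wkuv A x y vs es \<Longrightarrow> dist B (f x) (f y) \<le> length es"
proof -
  assume w: "wkuv A x y vs es"
  have ne: "vs \<noteq> []" using w wk_nonempty unfolding wkuv_def by auto
  have "wkuv B (f x) (f y) (map f vs) (map g es)" using fw w ne unfolding wkuv_def by (auto simp: hd_map last_map)
  then show ?thesis using dist_le by fastforce
qed

lemma U_fw: "U A vs es \<Longrightarrow> U B (map f vs) (map g es)"
proof -
  assume u: "U A vs es"
  have w: "wk A vs es" "distinct vs" "length es = dist A (hd vs) (last vs)" using u unfolding U_def by auto
  have ne: "vs \<noteq> []" using w wk_nonempty by auto
  have sv: "set vs \<subseteq> verts A" using wk_verts[OF w(1)] .
  have hl: "hd (map f vs) = f (hd vs)" "last (map f vs) = f (last vs)" using ne by (auto simp: hd_map last_map)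
  have wB: "wk B (map f vs) (map g es)" using fw[OF w(1)] .
  have dB: "distinct (map f vs)" using w(2) sv f by (simp add: bij_betw_def distinct_map inj_on_subset[of f "verts A"])
  have hv: "hd vs \<in> verts A" "last vs \<in> verts A" using sv ne by auto
  have rB: "reach B (f (hd vs)) (f (last vs))" using wB hl unfolding reach_def wkuv_def by metis
  have "dist A (hd vs) (last vs) \<le> dist B (f (hd vs)) (f (last vs))" using reach_back[OF hv rB] by simp
  moreover have "dist B (f (hd vs)) (f (last vs)) \<le> length es"
    using dist_fw[of "hd vs" "last vs" vs es] w unfolding wkuv_def by simp
  ultimately have L: "length (map g es) = dist B (hd (map f vs)) (last (map f vs))" using w(3) hl by simp
  have "ws = map f vs \<and> fs = map g es"
    if "wkuv B (hd (map f vs)) (last (map f vs)) ws fs" "length fs \<le> length (map g es)" for ws fs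
  proof -
    have ne': "ws \<noteq> []" using that wk_nonempty unfolding wkuv_def by auto
    have wsB: "set ws \<subseteq> verts B" "set fs \<subseteq> edges B"
      using that wk_verts[of B ws fs] wk_edges[of B ws fs] unfolding wkuv_def by auto
    have "wkuv A (hd vs) (last vs) (map f' ws) (map g' fs)"
      using bw that ne' hl ff' hv unfolding wkuv_def by (auto simp: hd_map last_map)
    from U_walk_eq[OF u this] that(2) have "map f' ws = vs" "map g' fs = es" by auto
    then show ?thesis using map_ff'[OF wsB(1)] map_gg'[OF wsB(2)] by metis
  qed
  then show ?thesis unfolding U_def using wB dB L by blast
qed

end


lemma gdist_reach: "reach K x y \<Longrightarrow> gdist K x y = enat (dist K x y)"
proof -
  assume r: "reach K x y"
  from dist_path[OF r] obtain vs es where W: "wkuv K x y vs es" "distinct vs" "length es = dist K x y" by blast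
  have "is_uv_path K x y vs es" using W by (simp add: is_uv_path_wk)
  then have "(vs, es) \<in> {(vs, es). is_uv_path K x y vs es}" by simp
  then have le: "gdist K x y \<le> enat (dist K x y)" unfolding gdist_def using W(3)
    by (metis (no_types, lifting) INF_lower snd_conv)
  have "enat (dist K x y) \<le> gdist K x y" unfolding gdist_def
  proof (rule INF_greatest)
    fix p assume "p \<in> {(vs, es). is_uv_path K x y vs es}"
    then obtain vs' es' where "p = (vs', es')" "wkuv K x y vs' es'" by (auto simp: is_uv_path_wk)
    then show "enat (dist K x y) \<le> enat (length (snd p))" using dist_le by auto
  qed
  with le show ?thesis by simp
qed

lemma gdist_noreach: "\<not> reach K x y \<Longrightarrow> gdist K x y = \<infinity>"
proof -
  assume "\<not> reach K x y"
  then have e: "{(vs, es). is_uv_path K x y vs es} = {}" using is_uv_path_wk wkuv_reach by fastforce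
  show ?thesis unfolding gdist_def by (simp only: e INF_empty) (simp add: top_enat_def)
qed

lemma gdist_le_diam: "x \<in> verts K \<Longrightarrow> y \<in> verts K \<Longrightarrow> gdist K x y \<le> diam K"
  unfolding diam_def by (rule SUP_upper2[of x]) (auto intro: SUP_upper)

lemma diam_fin: "diam K = enat d \<Longrightarrow> x \<in> verts K \<Longrightarrow> y \<in> verts K \<Longrightarrow> reach K x y \<and> dist K x y \<le> d"
proof -
  assume d: "diam K = enat d" and xy: "x \<in> verts K" "y \<in> verts K"
  have g: "gdist K x y \<le> enat d" using gdist_le_diam[OF xy] d by simp
  have r: "reach K x y" using g gdist_noreach by fastforce
  then show ?thesis using g gdist_reach[OF r] by simp
qed

lemma usp_le_diam: "mgraph G \<Longrightarrow> diam G = enat d \<Longrightarrow> usp G \<le> d + 1"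
proof -
  assume m: "mgraph G" and d: "diam G = enat d"
  obtain vs es where u: "U G vs es" "length vs = usp G" using usp_attained[OF m] by blast
  have w: "wk G vs es" "length es = dist G (hd vs) (last vs)" using u unfolding U_def by auto
  have "hd vs \<in> verts G" "last vs \<in> verts G" using wk_verts[OF w(1)] wk_nonempty[OF w(1)] by auto
  from diam_fin[OF d this] have "dist G (hd vs) (last vs) \<le> d" by simp
  then show ?thesis using w u(2) wk_len[OF w(1)] by simp
qed

lemma main_bound:
  fixes G :: "('v, 'e) mgraph" and H :: "('w, 'f) mgraph"
  assumes mG: "mgraph G" and dG: "diam G = enat d" and mH: "mgraph H" and mi: "is_minor G H"
  shows "card (verts G) \<le> sp H + max (usp G) d"
proof -
  obtain H' where st: "minor_step\<^sup>*\<^sup>* H H'" and iso: "mg_iso H' G" using mi unfolding is_minor_def by blast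
  from minor_steps_Psi[OF st mH] have P: "Psi H' \<le> Psi H" "mgraph H'" by auto
  have P2: "Psi H \<le> sp H" using Psi_le_sp[OF mH] .
  from iso obtain f g where fg: "bij_betw f (verts H') (verts G)" "bij_betw g (edges H') (edges G)"
    "\<forall>e\<in>edges H'. ends G (g e) = f ` ends H' e" unfolding mg_iso_def by blast
  interpret isom H' G f g using fg P(2) by unfold_locales auto
  have cardeq: "card (verts H') = card (verts G)" using bij_betw_same_card[OF fg(1)] .
  have fH': "finite (verts H')" "verts H' \<noteq> {}" using P(2) unfolding mgraph_def by auto
  have fG: "finite (verts G)" using mG unfolding mgraph_def by auto
  have conn: "reach H' x y \<and> dist H' x y \<le> d" if "x \<in> verts H'" "y \<in> verts H'" for x y
  proof -
    have "f x \<in> verts G" "f y \<in> verts G" using that fg(1) by (auto simp: bij_betw_def)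
    from diam_fin[OF dG this] have "reach G (f x) (f y)" "dist G (f x) (f y) \<le> d" by auto
    with reach_back[OF that this(1)] show ?thesis by simp
  qed
  obtain u where u: "u \<in> verts H'" using fH' by blast
  have cu: "cmp H' u = verts H'"
  proof
    show "cmp H' u \<subseteq> verts H'" by (rule cmp_sub)
    show "verts H' \<subseteq> cmp H' u" using conn u unfolding cmp_def by blast
  qed
  obtain x y where xy: "x \<in> cmp H' u" "y \<in> cmp H' u" "Mc H' u = val H' x y" using Mc_attained[OF fH'(1) u] by blast
  have "val H' x y \<le> max (usp G) d"
  proof (cases "hasu H' x y")
    case True
    then obtain vs es where U1: "U H' vs es" "hd vs = x" "last vs = y" unfolding hasu_def by blast
    have "val H' x y = length vs" using hasu_val[OF U1(1)] U1 by simp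
    moreover have "length (map f vs) \<le> usp G" using usp_ge[OF fG U_fw[OF U1(1)]] .
    ultimately show ?thesis by simp
  next
    case False
    then have "val H' x y = dist H' x y" unfolding val_def by simp
    moreover have "dist H' x y \<le> d" using conn xy cu by auto
    ultimately show ?thesis by simp
  qed
  moreover have "card (cmp H' u) - Mc H' u \<le> Psi H'" using Psi_ge[OF fH'(1) u] .
  ultimately have "card (verts H') - Mc H' u \<le> Psi H'" "Mc H' u \<le> max (usp G) d" using cu xy(3) by auto
  then have "card (verts H') \<le> Psi H' + max (usp G) d" by linarith
  then show ?thesis using cardeq P P2 by linarith
qed

lemma floor_nonempty:
  fixes G :: "('v, 'e) mgraph"
  assumes mG: "mgraph G"
  shows "\<exists>H :: (nat, nat) mgraph. mgraph H \<and> is_minor G H"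
proof -
  have fV: "finite (verts G)" and fE: "finite (edges G)" and neV: "verts G \<noteq> {}"
    and en: "\<forall>e\<in>edges G. ends G e \<subseteq> verts G \<and> card (ends G e) = 2"
    using mG unfolding mgraph_def by auto
  obtain fv :: "'v \<Rightarrow> nat" where fv: "inj_on fv (verts G)" using finite_imp_inj_to_nat_seg[OF fV] by blast
  obtain fe :: "'e \<Rightarrow> nat" where fe: "inj_on fe (edges G)" using finite_imp_inj_to_nat_seg[OF fE] by blast
  define H0 :: "(nat, nat) mgraph" where
    "H0 = \<lparr>verts = fv ` verts G, edges = fe ` edges G, ends = (\<lambda>i. fv ` ends G (inv_into (edges G) fe i))\<rparr>"
  have m0: "mgraph H0"
    unfolding mgraph_def
  proof (intro conjI)
    show "finite (verts H0)" "finite (edges H0)" "verts H0 \<noteq> {}" unfolding H0_def using fV fE neV by auto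
    show "\<forall>e\<in>edges H0. ends H0 e \<subseteq> verts H0 \<and> card (ends H0 e) = 2"
    proof
      fix i assume "i \<in> edges H0"
      then obtain e where e: "e \<in> edges G" "i = fe e" unfolding H0_def by auto
      then have ie: "inv_into (edges G) fe i = e" using fe by simp
      have "card (fv ` ends G e) = card (ends G e)" using en e(1) fv by (meson card_image inj_on_subset)
      then show "ends H0 i \<subseteq> verts H0 \<and> card (ends H0 i) = 2" unfolding H0_def using ie en e(1) by auto
    qed
  qed
  have "mg_iso H0 G"
    unfolding mg_iso_def
  proof (intro exI conjI)
    show "bij_betw (inv_into (verts G) fv) (verts H0) (verts G)"
      unfolding H0_def using bij_betw_inv_into[OF inj_on_imp_bij_betw[OF fv]] by simp
    show "bij_betw (inv_into (edges G) fe) (edges H0) (edges G)"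
      unfolding H0_def using bij_betw_inv_into[OF inj_on_imp_bij_betw[OF fe]] by simp
    show "\<forall>i\<in>edges H0. ends G (inv_into (edges G) fe i) = inv_into (verts G) fv ` ends H0 i"
    proof
      fix i assume "i \<in> edges H0"
      then obtain e where e: "e \<in> edges G" "i = fe e" unfolding H0_def by auto
      then have ie: "inv_into (edges G) fe i = e" using fe by simp
      show "ends G (inv_into (edges G) fe i) = inv_into (verts G) fv ` ends H0 i"
        unfolding H0_def using ie en e(1) fv by (simp add: inv_into_image_cancel)
    qed
  qed
  then have "is_minor G H0" unfolding is_minor_def by blast
  then show ?thesis using m0 by blast
qed

theorem theorem4p6:
  fixes G :: "('v, 'e) mgraph"
  assumes "mgraph G"
  shows "enat (card (verts G)) \<le> enat (sp_floor G) + diam G + 1 \<and>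
         (enat (usp G) \<le> diam G \<longrightarrow> enat (card (verts G)) \<le> enat (sp_floor G) + diam G)"
proof (cases "diam G")
  case infinity
  then show ?thesis by simp
next
  case (enat d)
  define S where "S = {sp H | H :: (nat, nat) mgraph. mgraph H \<and> is_minor G H}"
  have "S \<noteq> {}" using floor_nonempty[OF assms] unfolding S_def by blast
  then have "Inf S \<in> S" by (rule Inf_nat_def1)
  moreover have "sp_floor G = Inf S" unfolding sp_floor_def S_def ..
  ultimately have "sp_floor G \<in> S" by simp
  then obtain H :: "(nat, nat) mgraph" where H: "sp_floor G = sp H" "mgraph H" "is_minor G H"
    unfolding S_def by blast
  have b: "card (verts G) \<le> sp H + max (usp G) d" using main_bound[OF assms enat H(2,3)] .
  have u: "usp G \<le> d + 1" using usp_le_diam[OF assms enat] .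
  have c1: "card (verts G) \<le> sp_floor G + d + 1" using b u H(1) by simp
  have c2: "usp G \<le> d \<Longrightarrow> card (verts G) \<le> sp_floor G + d" using b H(1) by simp
  show ?thesis using c1 c2 enat by (simp add: one_enat_def)
qed

end
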